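(* Let $R$ be a local ring with maximal ideal $\mathfrak m\neq 0$ such that $\mathfrak m^2=0$ and $\mathfrak m=Rx=xR$ for all $x\in\mathfrak m\setminus\{0\}$, and fix $x\in\mathfrak m\setminus\{0\}$. Then for every homomorphism $f:P\to Q$ of free left $R$-modules (respectively finitely generated free left $R$-modules) there exist free (respectively finitely generated free) left $R$-modules $M,N,V,W$ and isomorphisms $P\cong M\oplus N\oplus V$, $Q\cong M\oplus N\oplus W$ under which $f$ corresponds to the map $M\oplus N\oplus V\to M\oplus N\oplus W$ given by the matrix $\begin{pmatrix}1&0&0\\0&\cdot x&0\\0&0&0\end{pmatrix}$, where $\cdot x:N\to N$ denotes right multiplication by $x$ coordinatewise with respect to a basis of $N$.
   Context: Local ring: unique maximal left ideal $\mathfrak m$ (two-sided). *)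

theory Defs
  imports Main
begin

definition left_ideal :: "'a::ring_1 set \<Rightarrow> bool" where
  "left_ideal L \<longleftrightarrow> 0 \<in> L \<and> (\<forall>a\<in>L. \<forall>b\<in>L. a + b \<in> L) \<and> (\<forall>a\<in>L. - a \<in> L)
     \<and> (\<forall>r. \<forall>a\<in>L. r * a \<in> L)"

definition maximal_left_ideal :: "'a::ring_1 set \<Rightarrow> bool" where
  "maximal_left_ideal L \<longleftrightarrow> left_ideal L \<and> L \<noteq> UNIV \<and>
     (\<forall>L'. left_ideal L' \<and> L \<subseteq> L' \<and> L' \<noteq> UNIV \<longrightarrow> L' = L)"

definition local_ring :: "'a::ring_1 itself \<Rightarrow> bool" where
  "local_ring _ \<longleftrightarrow> (\<exists>!L::'a set. maximal_left_ideal L)"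

text \<open>The free left module R^(I) on an index set I: finitely supported functions
  vanishing outside I, with pointwise addition and left scalar multiplication.\<close>
definition fsupp_on :: "'i set \<Rightarrow> ('i \<Rightarrow> 'a::ring_1) set" where
  "fsupp_on I = {v. (\<forall>i. i \<notin> I \<longrightarrow> v i = 0) \<and> finite {i. v i \<noteq> 0}}"

definition lin_on :: "'i set \<Rightarrow> 'j set \<Rightarrow> (('i \<Rightarrow> 'a::ring_1) \<Rightarrow> ('j \<Rightarrow> 'a)) \<Rightarrow> bool" where
  "lin_on I J f \<longleftrightarrow> (\<forall>v\<in>fsupp_on I. f v \<in> fsupp_on J)
     \<and> (\<forall>u\<in>fsupp_on I. \<forall>v\<in>fsupp_on I. f (\<lambda>i. u i + v i) = (\<lambda>j. f u j + f v j))
     \<and> (\<forall>r. \<forall>v\<in>fsupp_on I. f (\<lambda>i. r * v i) = (\<lambda>j. r * f v j))"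

definition lin_iso :: "'i set \<Rightarrow> 'j set \<Rightarrow> (('i \<Rightarrow> 'a::ring_1) \<Rightarrow> ('j \<Rightarrow> 'a)) \<Rightarrow> bool" where
  "lin_iso I J f \<longleftrightarrow> lin_on I J f \<and> bij_betw f (fsupp_on I) (fsupp_on J)"

text \<open>The map M \<oplus> N \<oplus> V \<rightarrow> M \<oplus> N \<oplus> W given by the matrix diag(1, \<cdot>x, 0), where the
  direct sum M \<oplus> N \<oplus> V is R^(A <+> (B <+> C)) and right multiplication by x is
  taken coordinatewise w.r.t. the standard basis of N = R^(B).\<close>
definition diag_map :: "'a::ring_1 \<Rightarrow> (('k + ('k + 'k)) \<Rightarrow> 'a) \<Rightarrow> (('k + ('k + 'k)) \<Rightarrow> 'a)" where
  "diag_map x u = (\<lambda>t. case t of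
       Inl a \<Rightarrow> u (Inl a)
     | Inr (Inl b) \<Rightarrow> u (Inr (Inl b)) * x
     | Inr (Inr d) \<Rightarrow> 0)"

end

theory Submission
  imports Defs
begin

lemma ex_wo: "\<exists>lt::'a\<Rightarrow>'a\<Rightarrow>bool. (\<forall>a. \<not> lt a a) \<and> (\<forall>a b c. lt a b \<longrightarrow> lt b c \<longrightarrow> lt a c)
   \<and> (\<forall>a b. a \<noteq> b \<longrightarrow> lt a b \<or> lt b a) \<and> wfP lt"
proof -
  from well_ordering[where 'a='a] obtain r :: "'a rel" where wo: "Well_order r" and univ: "Field r = UNIV"
    by (elim exE conjE)
  define lt where "lt a b \<longleftrightarrow> (a,b) \<in> r - Id" for a b
  have wf: "wf (r - Id)" using wo by (simp add: well_order_on_def)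
  have lin: "Linear_order r" using wo by (simp add: well_order_on_def)
  have tr: "trans r" using lin by (simp add: linear_order_on_def partial_order_on_def preorder_on_def)
  have an: "antisym r" using lin by (simp add: linear_order_on_def partial_order_on_def)
  have tot: "total_on UNIV r" using lin univ by (simp add: linear_order_on_def)
  have lteq: "lt = (\<lambda>a b. (a,b) \<in> r - Id)" by (simp add: fun_eq_iff lt_def)
  have "wfP lt" by (simp only: lteq wfp_wf_eq wf)
  moreover have "\<forall>a b c. lt a b \<longrightarrow> lt b c \<longrightarrow> lt a c"
  proof (intro allI impI)
    fix a b c assume ab: "lt a b" and bc: "lt b c"
    then have 1: "(a,b) \<in> r" "a \<noteq> b" "(b,c) \<in> r" "b \<noteq> c" by (auto simp: lt_def)
    then have "(a,c) \<in> r" using tr by (meson transD)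
    moreover have "a \<noteq> c"
    proof
      assume "a = c"
      then have "(b,a) \<in> r" using 1 by simp
      then show False using 1 an by (meson antisymD)
    qed
    ultimately show "lt a c" by (simp add: lt_def)
  qed
  moreover have "\<forall>a b. a \<noteq> b \<longrightarrow> lt a b \<or> lt b a"
  proof (intro allI impI)
    fix a b :: 'a assume "a \<noteq> b"
    then have "(a,b) \<in> r \<or> (b,a) \<in> r" using tot by (simp add: total_on_def)
    then show "lt a b \<or> lt b a" using \<open>a \<noteq> b\<close> by (auto simp: lt_def)
  qed
  moreover have "\<forall>a. \<not> lt a a" by (simp add: lt_def)
  ultimately show ?thesis by blast
qed

lemma finite_max:
  assumes tr: "\<forall>a b c. lt a b \<longrightarrow> lt b c \<longrightarrow> lt a c"
    and tot: "\<forall>a b. a \<noteq> b \<longrightarrow> lt a b \<or> lt b a"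
  shows "finite X \<Longrightarrow> X \<noteq> {} \<Longrightarrow> \<exists>x\<in>X. \<forall>y\<in>X. y \<noteq> x \<longrightarrow> lt y x"
proof (induction X rule: finite_induct)
  case empty then show ?case by simp
next
  case (insert a F)
  show ?case
  proof (cases "F = {}")
    case True then show ?thesis by simp
  next
    case False
    then obtain b where b: "b \<in> F" "\<forall>y\<in>F. y \<noteq> b \<longrightarrow> lt y b" using insert by blast
    show ?thesis
    proof (cases "lt a b")
      case True
      have "\<forall>y\<in>insert a F. y \<noteq> b \<longrightarrow> lt y b" using b True by blast
      then show ?thesis using b by blast
    next
      case False
      have "a \<noteq> b" using b(1) insert(2) by blast
      then have ba: "lt b a" using tot False by blast
      have "\<forall>y\<in>insert a F. y \<noteq> a \<longrightarrow> lt y a"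
      proof (intro ballI impI)
        fix y assume y: "y \<in> insert a F" "y \<noteq> a"
        then have "y \<in> F" by simp
        then have "y = b \<or> lt y b" using b by blast
        then show "lt y a" using ba tr by blast
      qed
      then show ?thesis by blast
    qed
  qed
qed

definition lc :: "('t \<Rightarrow> 'a::ring_1) \<Rightarrow> ('t \<Rightarrow> 'k \<Rightarrow> 'a) \<Rightarrow> 'k \<Rightarrow> 'a" where
  "lc c w = (\<lambda>k. \<Sum>t\<in>{t. c t \<noteq> 0}. c t * w t k)"

lemma lc_sum:
  assumes "finite S" "{t. c t \<noteq> 0} \<subseteq> S"
  shows "lc c w k = (\<Sum>t\<in>S. c t * w t k)"
  unfolding lc_def using assms by (intro sum.mono_neutral_left) auto

lemma lc_cong:
  assumes "finite S" "{t. c t \<noteq> 0} \<subseteq> S" "{t. d t \<noteq> 0} \<subseteq> S"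
    and "\<And>t k. t \<in> S \<Longrightarrow> c t * w t k = d t * v t k"
  shows "lc c w = lc d v"
proof
  fix k
  have "lc c w k = (\<Sum>t\<in>S. c t * w t k)" by (rule lc_sum[OF assms(1,2)])
  also have "\<dots> = (\<Sum>t\<in>S. d t * v t k)" by (rule sum.cong) (simp_all add: assms(4))
  also have "\<dots> = lc d v k" by (rule lc_sum[OF assms(1,3), symmetric])
  finally show "lc c w k = lc d v k" .
qed

lemma lc_add:
  assumes "finite {t. c t \<noteq> 0}" "finite {t. d t \<noteq> 0}"
  shows "lc (\<lambda>t. c t + d t) w = (\<lambda>k. lc c w k + lc d w k)"
proof
  fix k
  let ?S = "{t. c t \<noteq> 0} \<union> {t. d t \<noteq> 0}"
  have f: "finite ?S" using assms by simp
  have "lc (\<lambda>t. c t + d t) w k = (\<Sum>t\<in>?S. (c t + d t) * w t k)"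
    by (rule lc_sum[OF f]) auto
  also have "\<dots> = (\<Sum>t\<in>?S. c t * w t k) + (\<Sum>t\<in>?S. d t * w t k)"
    by (simp add: distrib_right sum.distrib)
  also have "\<dots> = lc c w k + lc d w k"
    by (simp add: lc_sum[OF f])
  finally show "lc (\<lambda>t. c t + d t) w k = lc c w k + lc d w k" .
qed

lemma lc_smul:
  assumes "finite {t. c t \<noteq> 0}"
  shows "lc (\<lambda>t. r * c t) w = (\<lambda>k. r * lc c w k)"
proof
  fix k
  have "lc (\<lambda>t. r * c t) w k = (\<Sum>t\<in>{t. c t \<noteq> 0}. (r * c t) * w t k)"
    by (rule lc_sum[OF assms]) auto
  also have "\<dots> = r * lc c w k"
    by (simp add: lc_def sum_distrib_left mult.assoc)
  finally show "lc (\<lambda>t. r * c t) w k = r * lc c w k" .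
qed

lemma lc_neg:
  assumes "finite {t. c t \<noteq> 0}"
  shows "lc (\<lambda>t. - c t) w = (\<lambda>k. - lc c w k)"
  using lc_smul[OF assms, of "-1" w] by simp

lemma lc_diff:
  assumes "finite {t. c t \<noteq> 0}" "finite {t. d t \<noteq> 0}"
  shows "lc (\<lambda>t. c t - d t) w = (\<lambda>k. lc c w k - lc d w k)"
proof -
  have "finite {t. - d t \<noteq> 0}" using assms by simp
  then have "lc (\<lambda>t. c t + - d t) w = (\<lambda>k. lc c w k + lc (\<lambda>t. - d t) w k)"
    by (rule lc_add[OF assms(1)])
  moreover have "\<And>k. lc (\<lambda>t. - d t) w k = - lc d w k" using lc_neg[OF assms(2)] by metis
  ultimately show ?thesis by simp
qed

lemma lc_zero: "lc (\<lambda>t. 0) w = (\<lambda>k. 0)"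
  by (simp add: lc_def)

lemma lc_single: "lc (\<lambda>s. if s = t then r else 0) w = (\<lambda>k. r * w t k)"
proof
  fix k show "lc (\<lambda>s. if s = t then r else 0) w k = r * w t k"
  proof -
    have "lc (\<lambda>s. if s = t then r else 0) w k = (\<Sum>s\<in>{t}. (if s = t then r else 0) * w s k)"
      by (rule lc_sum) auto
    then show ?thesis by simp
  qed
qed

lemma fsupp_finite: "c \<in> fsupp_on T \<Longrightarrow> finite {t. c t \<noteq> 0}"
  by (simp add: fsupp_on_def)

lemma fsupp_out: "c \<in> fsupp_on T \<Longrightarrow> t \<notin> T \<Longrightarrow> c t = 0"
  by (simp add: fsupp_on_def)

lemma fsupp_sub: "c \<in> fsupp_on T \<Longrightarrow> {t. c t \<noteq> 0} \<subseteq> T"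
  by (auto simp add: fsupp_on_def)

lemma fsupp_I: "(\<And>t. t \<notin> T \<Longrightarrow> c t = 0) \<Longrightarrow> finite {t. c t \<noteq> 0} \<Longrightarrow> c \<in> fsupp_on T"
  by (simp add: fsupp_on_def)

lemma fsupp_mono: "c \<in> fsupp_on T \<Longrightarrow> T \<subseteq> T' \<Longrightarrow> c \<in> fsupp_on T'"
  by (auto simp add: fsupp_on_def)

lemma fsupp_add: "u \<in> fsupp_on T \<Longrightarrow> v \<in> fsupp_on T \<Longrightarrow> (\<lambda>t. u t + v t) \<in> fsupp_on T"
  unfolding fsupp_on_def
proof (clarsimp)
  assume "finite {i. u i \<noteq> 0}" "finite {i. v i \<noteq> 0}"
  then have "finite ({t. u t \<noteq> 0} \<union> {t. v t \<noteq> 0})" by simp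
  moreover have "{t. u t + v t \<noteq> 0} \<subseteq> {t. u t \<noteq> 0} \<union> {t. v t \<noteq> 0}" by auto
  ultimately show "finite {t. u t + v t \<noteq> 0}" by (rule finite_subset[rotated])
qed

lemma fsupp_smul: "u \<in> fsupp_on T \<Longrightarrow> (\<lambda>t. r * u t) \<in> fsupp_on T"
  unfolding fsupp_on_def
proof (clarsimp)
  assume "finite {i. u i \<noteq> 0}"
  moreover have "{t. r * u t \<noteq> 0} \<subseteq> {t. u t \<noteq> 0}" by auto
  ultimately show "finite {t. r * u t \<noteq> 0}" by (rule finite_subset[rotated])
qed

lemma fsupp_smulr: "u \<in> fsupp_on T \<Longrightarrow> (\<lambda>t. u t * r) \<in> fsupp_on T"
  unfolding fsupp_on_def
proof (clarsimp)
  assume "finite {i. u i \<noteq> 0}"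
  moreover have "{t. u t * r \<noteq> 0} \<subseteq> {t. u t \<noteq> 0}" by auto
  ultimately show "finite {t. u t * r \<noteq> 0}" by (rule finite_subset[rotated])
qed

lemma fsupp_diff: "u \<in> fsupp_on T \<Longrightarrow> v \<in> fsupp_on T \<Longrightarrow> (\<lambda>t. u t - v t) \<in> fsupp_on T"
  unfolding fsupp_on_def
proof (clarsimp)
  assume "finite {i. u i \<noteq> 0}" "finite {i. v i \<noteq> 0}"
  then have "finite ({t. u t \<noteq> 0} \<union> {t. v t \<noteq> 0})" by simp
  moreover have "{t. u t \<noteq> v t} \<subseteq> {t. u t \<noteq> 0} \<union> {t. v t \<noteq> 0}" by auto
  ultimately show "finite {t. u t \<noteq> v t}" by (rule finite_subset[rotated])
qed

lemma fsupp_zero: "(\<lambda>t. 0) \<in> fsupp_on T"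
  by (simp add: fsupp_on_def)

lemma fsupp_single: "t \<in> T \<Longrightarrow> (\<lambda>s. if s = t then r else 0) \<in> fsupp_on T"
  unfolding fsupp_on_def
proof (intro CollectI conjI allI impI)
  have "{s. (if s = t then r else 0) \<noteq> 0} \<subseteq> {t}" by auto
  then show "finite {s. (if s = t then r else 0) \<noteq> 0}" by (rule finite_subset) simp
qed (auto)

lemma lc_fsupp:
  assumes c: "c \<in> fsupp_on T" and w: "\<And>t. t \<in> T \<Longrightarrow> w t \<in> fsupp_on K"
  shows "lc c w \<in> fsupp_on K"
proof (rule fsupp_I)
  fix k assume k: "k \<notin> K"
  show "lc c w k = 0" unfolding lc_def
  proof (rule sum.neutral, rule ballI)
    fix t assume "t \<in> {t. c t \<noteq> 0}"
    then have "t \<in> T" using fsupp_sub[OF c] by blast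
    then have "w t k = 0" using fsupp_out[OF w k] by blast
    then show "c t * w t k = 0" by simp
  qed
next
  have "{k. lc c w k \<noteq> 0} \<subseteq> (\<Union>t\<in>{t. c t \<noteq> 0}. {k. w t k \<noteq> 0})"
  proof
    fix k assume "k \<in> {k. lc c w k \<noteq> 0}"
    then have ne: "(\<Sum>t\<in>{t. c t \<noteq> 0}. c t * w t k) \<noteq> 0" by (simp add: lc_def)
    have "\<exists>t\<in>{t. c t \<noteq> 0}. c t * w t k \<noteq> 0"
    proof (rule ccontr)
      assume "\<not> (\<exists>t\<in>{t. c t \<noteq> 0}. c t * w t k \<noteq> 0)"
      then have "(\<Sum>t\<in>{t. c t \<noteq> 0}. c t * w t k) = 0" by (intro sum.neutral) blast
      then show False using ne by simp
    qed
    then obtain t where "c t \<noteq> 0" "c t * w t k \<noteq> 0" by blast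
    then have "w t k \<noteq> 0" by auto
    then show "k \<in> (\<Union>t\<in>{t. c t \<noteq> 0}. {k. w t k \<noteq> 0})" using \<open>c t \<noteq> 0\<close> by blast
  qed
  moreover have "finite (\<Union>t\<in>{t. c t \<noteq> 0}. {k. w t k \<noteq> 0})"
  proof (rule finite_UN_I)
    show "finite {t. c t \<noteq> 0}" using c by (rule fsupp_finite)
    fix t assume "t \<in> {t. c t \<noteq> 0}"
    then have "t \<in> T" using fsupp_sub[OF c] by blast
    then show "finite {k. w t k \<noteq> 0}" using w fsupp_finite by blast
  qed
  ultimately show "finite {k. lc c w k \<noteq> 0}" by (rule finite_subset)
qed

definition islead :: "'a::ring_1 set \<Rightarrow> ('k \<Rightarrow> 'k \<Rightarrow> bool) \<Rightarrow> ('k \<Rightarrow> 'a) \<Rightarrow> 'k \<Rightarrow> bool" where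
  "islead m lt v l \<longleftrightarrow> v l \<notin> m \<and> (\<forall>k. lt l k \<longrightarrow> v k \<in> m)"

definition inm :: "'a::ring_1 set \<Rightarrow> ('k \<Rightarrow> 'a) \<Rightarrow> bool" where
  "inm m v \<longleftrightarrow> (\<forall>k. v k \<in> m)"

locale lr =
  fixes m :: "'a::ring_1 set" and x :: 'a
  assumes m0: "0 \<in> m" and madd: "\<And>a b. a \<in> m \<Longrightarrow> b \<in> m \<Longrightarrow> a + b \<in> m"
    and mneg: "\<And>a. a \<in> m \<Longrightarrow> - a \<in> m"
    and mleft: "\<And>a r. a \<in> m \<Longrightarrow> r * a \<in> m" and mright: "\<And>a r. a \<in> m \<Longrightarrow> a * r \<in> m"
    and unit: "\<And>a. a \<notin> m \<Longrightarrow> \<exists>b. b * a = 1 \<and> a * b = 1"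
    and msq: "\<And>a b. a \<in> m \<Longrightarrow> b \<in> m \<Longrightarrow> a * b = 0"
    and xm: "x \<in> m" and lx: "\<And>a. a \<in> m \<Longrightarrow> \<exists>r. a = r * x" and rx: "\<And>a. a \<in> m \<Longrightarrow> \<exists>r. a = x * r"
    and annr: "\<And>a. x * a = 0 \<Longrightarrow> a \<in> m" and annl: "\<And>a. a * x = 0 \<Longrightarrow> a \<in> m"
begin

lemma msub: "a \<in> m \<Longrightarrow> b \<in> m \<Longrightarrow> a - b \<in> m"
proof -
  assume a: "a \<in> m" and b: "b \<in> m"
  have "a + - b \<in> m" using a mneg[OF b] by (rule madd)
  then show ?thesis by (simp only: diff_conv_add_uminus)
qed

lemma mcancel: "a + b \<in> m \<Longrightarrow> b \<in> m \<Longrightarrow> a \<in> m"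
proof -
  assume "a + b \<in> m" "b \<in> m"
  then have "a + b - b \<in> m" by (rule msub)
  then show ?thesis by simp
qed

lemma one_notin: "(1::'a) \<notin> m"
proof
  assume h: "1 \<in> m" then have "(1::'a) * 1 = 0" using msq[OF h h] by blast
  then show False by simp
qed

lemma unit_mult: "a \<notin> m \<Longrightarrow> b \<notin> m \<Longrightarrow> a * b \<notin> m"
proof
  assume a: "a \<notin> m" and b: "b \<notin> m" and ab: "a * b \<in> m"
  obtain b' where "b * b' = 1" using unit[OF b] by blast
  then have "a = a * b * b'" by (simp add: mult.assoc)
  then show False using mright[OF ab, of b'] a by simp
qed

lemma mright_cancel: "a * u \<in> m \<Longrightarrow> u \<notin> m \<Longrightarrow> a \<in> m"
  using unit_mult by blast

lemma msum: "finite S \<Longrightarrow> (\<And>t. t \<in> S \<Longrightarrow> g t \<in> m) \<Longrightarrow> sum g S \<in> m"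
proof (induction S rule: finite_induct)
  case empty then show ?case by (simp add: m0)
next
  case (insert a F) then show ?case by (simp add: madd)
qed

lemma xkill: "a \<in> m \<Longrightarrow> x * a = 0" "a \<in> m \<Longrightarrow> a * x = 0"
  using msq xm by auto

lemma lc_inm:
  assumes "finite {t. c t \<noteq> 0}" "\<And>t. c t \<in> m"
  shows "inm m (lc c w)"
  unfolding inm_def lc_def
proof
  fix k show "(\<Sum>t\<in>{t. c t \<noteq> 0}. c t * w t k) \<in> m"
    by (rule msum[OF assms(1)]) (rule mright[OF assms(2)])
qed

definition dx :: "('k \<Rightarrow> 'a) \<Rightarrow> 'k \<Rightarrow> 'a" where
  "dx v = (\<lambda>k. if v k = 0 then 0 else (SOME r. v k = x * r))"

lemma dx_eq: "inm m v \<Longrightarrow> v = (\<lambda>k. x * dx v k)"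
proof
  fix k assume "inm m v"
  then have "v k \<in> m" by (simp add: inm_def)
  then have "\<exists>r. v k = x * r" by (rule rx)
  then have "v k = x * (SOME r. v k = x * r)" by (rule someI_ex)
  then show "v k = x * dx v k" by (simp add: dx_def)
qed

lemma dx_fsupp: "v \<in> fsupp_on K \<Longrightarrow> dx v \<in> fsupp_on K"
  unfolding fsupp_on_def
proof (clarsimp)
  assume "\<forall>i. i \<notin> K \<longrightarrow> v i = 0" "finite {i. v i \<noteq> 0}"
  moreover have "{t. dx v t \<noteq> 0} \<subseteq> {t. v t \<noteq> 0}" by (auto simp: dx_def)
  ultimately show "(\<forall>i. i \<notin> K \<longrightarrow> dx v i = 0) \<and> finite {i. dx v i \<noteq> 0}"
    using finite_subset by (auto simp: dx_def)
qed

lemma fsupp_inm_notin: "v \<in> fsupp_on K \<Longrightarrow> finite {k. v k \<notin> m}"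
proof -
  assume v: "v \<in> fsupp_on K"
  have "{k. v k \<notin> m} \<subseteq> {k. v k \<noteq> 0}" using m0 by auto
  then show ?thesis using fsupp_finite[OF v] by (rule finite_subset)
qed

lemma islead_notinm: "islead m lt v l \<Longrightarrow> \<not> inm m v"
  by (auto simp: islead_def inm_def)

lemma islead_unique:
  assumes tot: "\<forall>a b. a \<noteq> b \<longrightarrow> lt a b \<or> lt b a"
  shows "islead m lt v l1 \<Longrightarrow> islead m lt v l2 \<Longrightarrow> l1 = l2"
  using tot unfolding islead_def by blast

lemma islead_ex:
  assumes irr: "\<forall>a. \<not> lt a a" and tr: "\<forall>a b c. lt a b \<longrightarrow> lt b c \<longrightarrow> lt a c"
    and tot: "\<forall>a b. a \<noteq> b \<longrightarrow> lt a b \<or> lt b a"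
    and v: "v \<in> fsupp_on K" and nv: "\<not> inm m v"
  shows "\<exists>l. islead m lt v l"
proof -
  have f: "finite {k. v k \<notin> m}" using v by (rule fsupp_inm_notin)
  have ne: "{k. v k \<notin> m} \<noteq> {}" using nv by (auto simp: inm_def)
  obtain l where l: "l \<in> {k. v k \<notin> m}" "\<forall>y\<in>{k. v k \<notin> m}. y \<noteq> l \<longrightarrow> lt y l"
    using finite_max[OF tr tot f ne] by blast
  have "\<forall>k. lt l k \<longrightarrow> v k \<in> m"
  proof (intro allI impI)
    fix k assume lk: "lt l k"
    show "v k \<in> m"
    proof (rule ccontr)
      assume "v k \<notin> m"
      then have "k = l \<or> lt k l" using l by blast
      then have "lt l l" using lk tr by blast
      then show False using irr by blast
    qed
  qed
  then show ?thesis using l(1) by (auto simp: islead_def)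
qed

lemma islead_cong: "inm m (\<lambda>k. u k - v k) \<Longrightarrow> islead m lt u l \<longleftrightarrow> islead m lt v l"
proof -
  assume d: "inm m (\<lambda>k. u k - v k)"
  have "\<And>k. u k \<in> m \<longleftrightarrow> v k \<in> m"
  proof -
    fix k have dk: "u k - v k \<in> m" using d by (simp add: inm_def)
    have "u k = (u k - v k) + v k" "v k = u k - (u k - v k)" by simp_all
    then show "u k \<in> m \<longleftrightarrow> v k \<in> m" using dk madd msub by metis
  qed
  then show ?thesis by (simp add: islead_def)
qed

end

context lr begin

lemma core:
  assumes tr: "\<forall>a b c. lt a b \<longrightarrow> lt b c \<longrightarrow> lt a c"
    and tot: "\<forall>a b. a \<noteq> b \<longrightarrow> lt a b \<or> lt b a"
    and w: "\<And>t. t \<in> T \<Longrightarrow> islead m lt (w t) (lam t)"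
    and inj: "inj_on lam T"
    and c: "c \<in> fsupp_on T"
    and nz: "c t1 \<notin> m"
  shows "\<exists>t\<in>T. c t \<notin> m \<and> islead m lt (lc c w) (lam t)"
proof -
  define S where "S = {t\<in>T. c t \<notin> m}"
  define P where "P = {t. c t \<noteq> 0}"
  have fP: "finite P" using c by (simp add: P_def fsupp_finite)
  have SP: "S \<subseteq> P" using m0 by (auto simp: S_def P_def)
  have fS: "finite S" using fP SP by (rule finite_subset[rotated])
  have t1T: "t1 \<in> T"
  proof (rule ccontr)
    assume "t1 \<notin> T" then have "c t1 = 0" by (rule fsupp_out[OF c])
    then show False using nz m0 by simp
  qed
  have "t1 \<in> S" using t1T nz by (simp add: S_def)
  then have ne: "lam ` S \<noteq> {}" by blast
  obtain l where l: "l \<in> lam ` S" "\<forall>y\<in>lam ` S. y \<noteq> l \<longrightarrow> lt y l"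
    using finite_max[OF tr tot finite_imageI[OF fS] ne] by blast
  then obtain t0 where t0: "t0 \<in> S" "l = lam t0" by blast
  have t0T: "t0 \<in> T" "c t0 \<notin> m" using t0 by (auto simp: S_def)
  have less: "lt (lam t) l" if "t \<in> S" "t \<noteq> t0" for t
  proof -
    have "lam t \<noteq> lam t0" using inj that t0 by (auto simp: S_def inj_on_def)
    moreover have "lam t \<in> lam ` S" using that by blast
    ultimately show ?thesis using l(2) t0(2) by blast
  qed
  have lcP: "lc c w k = (\<Sum>t\<in>P. c t * w t k)" for k
    by (rule lc_sum[OF fP]) (simp add: P_def)
  have high: "\<forall>k. lt l k \<longrightarrow> lc c w k \<in> m"
  proof (intro allI impI)
    fix k assume lk: "lt l k"
    have "(\<Sum>t\<in>P. c t * w t k) \<in> m"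
    proof (rule msum[OF fP])
      fix t assume tP: "t \<in> P"
      show "c t * w t k \<in> m"
      proof (cases "c t \<in> m")
        case True then show ?thesis by (rule mright)
      next
        case False
        then have tS: "t \<in> S"
        proof -
          have "t \<in> T" using tP fsupp_sub[OF c] by (auto simp: P_def)
          then show ?thesis using False by (simp add: S_def)
        qed
        have "lt (lam t) k"
        proof (cases "t = t0")
          case True then show ?thesis using lk t0 by simp
        next
          case False then have "lt (lam t) l" using less tS by blast
          then show ?thesis using lk tr by blast
        qed
        moreover have "islead m lt (w t) (lam t)" using w tS by (simp add: S_def)
        ultimately have "w t k \<in> m" by (simp add: islead_def)
        then show ?thesis by (rule mleft)
      qed
    qed
    then show "lc c w k \<in> m" by (simp add: lcP)
  qed
  have t0P: "t0 \<in> P" using t0 SP by blast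
  have rest: "(\<Sum>t\<in>P - {t0}. c t * w t l) \<in> m"
  proof (rule msum)
    show "finite (P - {t0})" using fP by simp
    fix t assume tP: "t \<in> P - {t0}"
    show "c t * w t l \<in> m"
    proof (cases "c t \<in> m")
      case True then show ?thesis by (rule mright)
    next
      case False
      have "t \<in> T" using tP fsupp_sub[OF c] by (auto simp: P_def)
      then have tS: "t \<in> S" using False by (simp add: S_def)
      then have "lt (lam t) l" using less tP by blast
      moreover have "islead m lt (w t) (lam t)" using w tS by (simp add: S_def)
      ultimately have "w t l \<in> m" by (simp add: islead_def)
      then show ?thesis by (rule mleft)
    qed
  qed
  have lead0: "islead m lt (w t0) l" using w t0T t0 by simp
  then have "w t0 l \<notin> m" by (simp add: islead_def)
  then have first: "c t0 * w t0 l \<notin> m" using unit_mult t0T by blast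
  have "lc c w l = c t0 * w t0 l + (\<Sum>t\<in>P - {t0}. c t * w t l)"
    using lcP[of l] sum.remove[OF fP t0P, of "\<lambda>t. c t * w t l"] by simp
  then have "lc c w l \<notin> m" using first rest mcancel by metis
  then have "islead m lt (lc c w) l" using high by (simp add: islead_def)
  then show ?thesis using t0T t0 by blast
qed

lemma core_indep:
  assumes tr: "\<forall>a b c. lt a b \<longrightarrow> lt b c \<longrightarrow> lt a c"
    and tot: "\<forall>a b. a \<noteq> b \<longrightarrow> lt a b \<or> lt b a"
    and w: "\<And>t. t \<in> T \<Longrightarrow> islead m lt (w t) (lam t)"
    and inj: "inj_on lam T"
    and c: "c \<in> fsupp_on T"
    and i: "inm m (lc c w)"
  shows "c t \<in> m"
proof (rule ccontr)
  assume "c t \<notin> m"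
  then obtain t' where "islead m lt (lc c w) (lam t')" using core[OF tr tot w inj c] by blast
  then have "\<not> inm m (lc c w)" by (rule islead_notinm)
  then show False using i by blast
qed

end

context lr begin

lemma span:
  assumes irr: "\<forall>a. \<not> lt a a" and tr: "\<forall>a b c. lt a b \<longrightarrow> lt b c \<longrightarrow> lt a c"
    and tot: "\<forall>a b. a \<noteq> b \<longrightarrow> lt a b \<or> lt b a" and wf: "wfP lt"
    and U: "U \<subseteq> fsupp_on K"
    and Uadd: "\<And>u v. u \<in> U \<Longrightarrow> v \<in> U \<Longrightarrow> (\<lambda>k. u k + v k) \<in> U"
    and Usmul: "\<And>u r. u \<in> U \<Longrightarrow> (\<lambda>k. r * u k) \<in> U"
    and wU: "\<And>t. t \<in> T \<Longrightarrow> w t \<in> U"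
    and wl: "\<And>t. t \<in> T \<Longrightarrow> islead m lt (w t) (lam t)"
    and cover: "\<And>u l. u \<in> U \<Longrightarrow> islead m lt u l \<Longrightarrow> \<exists>t\<in>T. lam t = l"
    and u: "u \<in> U"
  shows "\<exists>c\<in>fsupp_on T. inm m (\<lambda>k. u k - lc c w k)"
proof -
  have main: "\<forall>u\<in>U. islead m lt u l \<longrightarrow> (\<exists>c\<in>fsupp_on T. inm m (\<lambda>k. u k - lc c w k))" for l
    using wf
  proof (induction l rule: wfp_induct_rule)
    case (less l)
    show ?case
    proof (intro ballI impI)
      fix u assume uU: "u \<in> U" and ul: "islead m lt u l"
      obtain t where tT: "t \<in> T" and tl: "lam t = l" using cover[OF uU ul] by blast
      have wtl: "islead m lt (w t) l" using wl[OF tT] tl by simp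
      then have "w t l \<notin> m" by (simp add: islead_def)
      then obtain b where b: "b * w t l = 1" using unit by blast
      define r where "r = u l * b"
      define u' where "u' = (\<lambda>k. u k + (- r) * w t k)"
      have u'U: "u' \<in> U" unfolding u'_def by (rule Uadd[OF uU Usmul[OF wU[OF tT]]])
      have u'eq: "u' k = u k - r * w t k" for k by (simp add: u'_def)
      have "r * w t l = u l" by (simp add: r_def mult.assoc b)
      then have u'l: "u' l = 0" by (simp add: u'eq)
      have lcs: "lc (\<lambda>s. c s + (if s = t then r else 0)) w = (\<lambda>k. lc c w k + r * w t k)"
        if "c \<in> fsupp_on T" for c
      proof -
        have f1: "finite {s. c s \<noteq> 0}" using that by (rule fsupp_finite)
        have f2: "finite {s. (if s = t then r else 0) \<noteq> 0}"
          using fsupp_finite[OF fsupp_single[OF tT, of r]] .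
        show ?thesis using lc_add[OF f1 f2, of w] lc_single[of t r w] by simp
      qed
      have csupp: "(\<lambda>s. c s + (if s = t then r else 0)) \<in> fsupp_on T" if "c \<in> fsupp_on T" for c
        using fsupp_add[OF that fsupp_single[OF tT]] .
      show "\<exists>c\<in>fsupp_on T. inm m (\<lambda>k. u k - lc c w k)"
      proof (cases "inm m u'")
        case True
        have "(\<lambda>s. 0 + (if s = t then r else 0)) \<in> fsupp_on T" by (rule csupp[OF fsupp_zero])
        moreover have "inm m (\<lambda>k. u k - lc (\<lambda>s. 0 + (if s = t then r else 0)) w k)"
          using True lcs[OF fsupp_zero] by (simp add: lc_zero u'eq[symmetric])
        ultimately show ?thesis by blast
      next
        case False
        have "u' \<in> fsupp_on K" using u'U U by blast
        then obtain l' where l': "islead m lt u' l'" using islead_ex[OF irr tr tot _ False] by blast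
        have "l' \<noteq> l" using l' u'l m0 by (auto simp: islead_def)
        moreover have "\<not> lt l l'"
        proof
          assume "lt l l'"
          then have "u l' \<in> m" "w t l' \<in> m" using ul wtl by (auto simp: islead_def)
          then have "u' l' \<in> m" by (simp add: u'eq msub mleft)
          then show False using l' by (simp add: islead_def)
        qed
        ultimately have "lt l' l" using tot by blast
        then obtain c where c: "c \<in> fsupp_on T" "inm m (\<lambda>k. u' k - lc c w k)"
          using less u'U l' by blast
        have "inm m (\<lambda>k. u k - lc (\<lambda>s. c s + (if s = t then r else 0)) w k)"
          using c(2) by (simp add: lcs[OF c(1)] u'eq algebra_simps)
        then show ?thesis using csupp[OF c(1)] by blast
      qed
    qed
  qed
  show ?thesis
  proof (cases "inm m u")
    case True
    then have "inm m (\<lambda>k. u k - lc (\<lambda>t. 0) w k)" by (simp add: lc_zero)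
    then show ?thesis using fsupp_zero by blast
  next
    case False
    have "u \<in> fsupp_on K" using u U by blast
    then obtain l where "islead m lt u l" using islead_ex[OF irr tr tot _ False] by blast
    then show ?thesis using main u by blast
  qed
qed

end

lemma lin_add: "lin_on I J f \<Longrightarrow> u \<in> fsupp_on I \<Longrightarrow> v \<in> fsupp_on I \<Longrightarrow>
   f (\<lambda>i. u i + v i) = (\<lambda>j. f u j + f v j)"
  by (simp add: lin_on_def)

lemma lin_smul: "lin_on I J f \<Longrightarrow> v \<in> fsupp_on I \<Longrightarrow> f (\<lambda>i. r * v i) = (\<lambda>j. r * f v j)"
  by (simp add: lin_on_def)

lemma lin_in: "lin_on I J f \<Longrightarrow> v \<in> fsupp_on I \<Longrightarrow> f v \<in> fsupp_on J"
  by (simp add: lin_on_def)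

lemma lin_zero: "lin_on I J f \<Longrightarrow> f (\<lambda>i. 0) = (\<lambda>j. 0)"
proof -
  assume f: "lin_on I J f"
  have "f (\<lambda>i. 0 * 0) = (\<lambda>j. 0 * f (\<lambda>i. 0) j)" by (rule lin_smul[OF f fsupp_zero])
  then show ?thesis by simp
qed

lemma lin_diff: "lin_on I J f \<Longrightarrow> u \<in> fsupp_on I \<Longrightarrow> v \<in> fsupp_on I \<Longrightarrow>
   f (\<lambda>i. u i - v i) = (\<lambda>j. f u j - f v j)"
proof -
  assume f: "lin_on I J f" and u: "u \<in> fsupp_on I" and v: "v \<in> fsupp_on I"
  have nv: "(\<lambda>i. (-1) * v i) \<in> fsupp_on I" by (rule fsupp_smul[OF v])
  have "f (\<lambda>i. u i + (-1) * v i) = (\<lambda>j. f u j + f (\<lambda>i. (-1) * v i) j)" by (rule lin_add[OF f u nv])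
  also have "\<dots> = (\<lambda>j. f u j + (-1) * f v j)" by (simp only: lin_smul[OF f v])
  finally show ?thesis by simp
qed

lemma lin_sum:
  assumes f: "lin_on I J f"
  shows "finite S \<Longrightarrow> (\<And>t. t \<in> S \<Longrightarrow> g t \<in> fsupp_on I) \<Longrightarrow>
    (\<lambda>i. \<Sum>t\<in>S. g t i) \<in> fsupp_on I \<and> f (\<lambda>i. \<Sum>t\<in>S. g t i) = (\<lambda>j. \<Sum>t\<in>S. f (g t) j)"
proof (induction S rule: finite_induct)
  case empty
  show ?case using lin_zero[OF f] fsupp_zero by simp
next
  case (insert a F)
  then have IH: "(\<lambda>i. \<Sum>t\<in>F. g t i) \<in> fsupp_on I" "f (\<lambda>i. \<Sum>t\<in>F. g t i) = (\<lambda>j. \<Sum>t\<in>F. f (g t) j)"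
    by auto
  have ga: "g a \<in> fsupp_on I" using insert by simp
  have e: "(\<lambda>i. \<Sum>t\<in>insert a F. g t i) = (\<lambda>i. g a i + (\<Sum>t\<in>F. g t i))"
    using insert(1,2) by simp
  have "(\<lambda>i. g a i + (\<Sum>t\<in>F. g t i)) \<in> fsupp_on I" by (rule fsupp_add[OF ga IH(1)])
  moreover have "f (\<lambda>i. g a i + (\<Sum>t\<in>F. g t i)) = (\<lambda>j. \<Sum>t\<in>insert a F. f (g t) j)"
    using lin_add[OF f ga IH(1)] IH(2) insert(1,2) by simp
  ultimately show ?case using e by simp
qed

lemma lin_lc:
  assumes f: "lin_on I J f" and c: "finite {t. c t \<noteq> 0}"
    and w: "\<And>t. c t \<noteq> 0 \<Longrightarrow> w t \<in> fsupp_on I"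
  shows "f (lc c w) = lc c (\<lambda>t. f (w t))"
proof -
  have g: "\<And>t. t \<in> {t. c t \<noteq> 0} \<Longrightarrow> (\<lambda>i. c t * w t i) \<in> fsupp_on I"
    using w fsupp_smul by blast
  have "f (lc c w) = (\<lambda>j. \<Sum>t\<in>{t. c t \<noteq> 0}. f (\<lambda>i. c t * w t i) j)"
    unfolding lc_def using lin_sum[OF f c, of "\<lambda>t i. c t * w t i"] g by blast
  also have "\<dots> = lc c (\<lambda>t. f (w t))"
    unfolding lc_def
  proof (rule ext, rule sum.cong)
    fix j t assume "t \<in> {t. c t \<noteq> 0}"
    then show "f (\<lambda>i. c t * w t i) j = c t * f (w t) j" using lin_smul[OF f w] by simp
  qed simp
  finally show ?thesis .
qed

context lr begin

lemma lin_inm: "lin_on I J f \<Longrightarrow> v \<in> fsupp_on I \<Longrightarrow> inm m v \<Longrightarrow> inm m (f v)"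
proof -
  assume f: "lin_on I J f" and v: "v \<in> fsupp_on I" and i: "inm m v"
  have "f v = f (\<lambda>i. x * dx v i)" using dx_eq[OF i] by simp
  also have "\<dots> = (\<lambda>j. x * f (dx v) j)" by (rule lin_smul[OF f dx_fsupp[OF v]])
  finally show ?thesis using mright[OF xm] by (simp add: inm_def)
qed

lemma basis:
  fixes w :: "'t \<Rightarrow> 'k \<Rightarrow> 'a"
  assumes w: "\<And>t. t \<in> T \<Longrightarrow> w t \<in> fsupp_on K"
    and ind: "\<And>c. c \<in> fsupp_on T \<Longrightarrow> inm m (lc c w) \<Longrightarrow> \<forall>t. c t \<in> m"
    and sp: "\<And>v. v \<in> fsupp_on K \<Longrightarrow> \<exists>c\<in>fsupp_on T. inm m (\<lambda>k. v k - lc c w k)"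
  shows "bij_betw (\<lambda>c. lc c w) (fsupp_on T) (fsupp_on K)"
    and "lin_iso K T (inv_into (fsupp_on T) (\<lambda>c. lc c w))"
proof -
  define g where "g = (\<lambda>c. lc c w)"
  have gin: "g c \<in> fsupp_on K" if "c \<in> fsupp_on T" for c
    unfolding g_def by (rule lc_fsupp[OF that w])
  have ker: "c = (\<lambda>t. 0)" if c: "c \<in> fsupp_on T" and z: "lc c w = (\<lambda>k. 0)" for c
  proof -
    have "inm m (lc c w)" using z m0 by (simp add: inm_def)
    then have cm: "\<forall>t. c t \<in> m" using ind c by blast
    then have ci: "inm m c" by (simp add: inm_def)
    define s where "s = dx c"
    have s: "s \<in> fsupp_on T" unfolding s_def by (rule dx_fsupp[OF c])
    have ce: "c = (\<lambda>t. x * s t)" unfolding s_def by (rule dx_eq[OF ci])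
    have "lc c w = (\<lambda>k. x * lc s w k)" using lc_smul[OF fsupp_finite[OF s], of x w] ce by simp
    then have "\<And>k. x * lc s w k = 0" using z by metis
    then have "inm m (lc s w)" using annr by (simp add: inm_def)
    then have "\<forall>t. s t \<in> m" using ind s by blast
    then show ?thesis using ce xkill(1) by auto
  qed
  have inj: "inj_on g (fsupp_on T)"
  proof (rule inj_onI)
    fix c d assume c: "c \<in> fsupp_on T" and d: "d \<in> fsupp_on T" and e: "g c = g d"
    have cd: "(\<lambda>t. c t - d t) \<in> fsupp_on T" by (rule fsupp_diff[OF c d])
    have "lc (\<lambda>t. c t - d t) w = (\<lambda>k. lc c w k - lc d w k)"
      by (rule lc_diff[OF fsupp_finite[OF c] fsupp_finite[OF d]])
    also have "\<dots> = (\<lambda>k. 0)" using e by (simp add: g_def)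
    finally have "(\<lambda>t. c t - d t) = (\<lambda>t. 0)" by (rule ker[OF cd])
    then show "c = d" by (simp add: fun_eq_iff)
  qed
  have surj: "g ` fsupp_on T = fsupp_on K"
  proof
    show "g ` fsupp_on T \<subseteq> fsupp_on K" using gin by blast
  next
    show "fsupp_on K \<subseteq> g ` fsupp_on T"
    proof
      fix v :: "'k \<Rightarrow> 'a" assume v: "v \<in> fsupp_on K"
      obtain c1 where c1: "c1 \<in> fsupp_on T" "inm m (\<lambda>k. v k - lc c1 w k)" using sp[OF v] by blast
      define r where "r = (\<lambda>k. v k - lc c1 w k)"
      have r: "r \<in> fsupp_on K" unfolding r_def by (rule fsupp_diff[OF v gin[OF c1(1), unfolded g_def]])
      have ri: "inm m r" using c1(2) by (simp add: r_def)
      define q where "q = dx r"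
      have q: "q \<in> fsupp_on K" unfolding q_def by (rule dx_fsupp[OF r])
      have re: "r = (\<lambda>k. x * q k)" unfolding q_def by (rule dx_eq[OF ri])
      obtain c2 where c2: "c2 \<in> fsupp_on T" "inm m (\<lambda>k. q k - lc c2 w k)" using sp[OF q] by blast
      have "x * (q k - lc c2 w k) = 0" for k using c2(2) xkill(1) by (simp add: inm_def)
      then have xq: "x * q k = x * lc c2 w k" for k by (simp add: right_diff_distrib)
      define c where "c = (\<lambda>t. c1 t + x * c2 t)"
      have c: "c \<in> fsupp_on T" unfolding c_def by (rule fsupp_add[OF c1(1) fsupp_smul[OF c2(1)]])
      have "lc c w = (\<lambda>k. lc c1 w k + lc (\<lambda>t. x * c2 t) w k)"
        unfolding c_def by (rule lc_add[OF fsupp_finite[OF c1(1)] fsupp_finite[OF fsupp_smul[OF c2(1)]]])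
      also have "\<dots> = (\<lambda>k. lc c1 w k + x * lc c2 w k)"
        using lc_smul[OF fsupp_finite[OF c2(1)], of x w] by simp
      also have "\<dots> = (\<lambda>k. lc c1 w k + r k)" using re xq by simp
      also have "\<dots> = v" by (simp add: r_def)
      finally have "g c = v" by (simp add: g_def)
      then show "v \<in> g ` fsupp_on T" using c by blast
    qed
  qed
  have bij: "bij_betw g (fsupp_on T) (fsupp_on K)" using inj surj by (simp add: bij_betw_def)
  then show "bij_betw (\<lambda>c. lc c w) (fsupp_on T) (fsupp_on K)" by (simp add: g_def)
  define \<phi> where "\<phi> = inv_into (fsupp_on T) g"
  have bphi: "bij_betw \<phi> (fsupp_on K) (fsupp_on T)" unfolding \<phi>_def by (rule bij_betw_inv_into[OF bij])
  have phin: "\<phi> v \<in> fsupp_on T" if "v \<in> fsupp_on K" for v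
    by (rule bij_betw_apply[OF bphi that])
  have gphi: "g (\<phi> v) = v" if "v \<in> fsupp_on K" for v
  proof -
    have "v \<in> g ` fsupp_on T" using surj that by simp
    then show ?thesis unfolding \<phi>_def by (rule f_inv_into_f)
  qed
  have phig: "\<phi> (g c) = c" if "c \<in> fsupp_on T" for c
    unfolding \<phi>_def by (rule inv_into_f_f[OF inj that])
  have gadd: "g (\<lambda>t. c t + d t) = (\<lambda>k. g c k + g d k)" if "c \<in> fsupp_on T" "d \<in> fsupp_on T" for c d
    unfolding g_def by (rule lc_add[OF fsupp_finite[OF that(1)] fsupp_finite[OF that(2)]])
  have gsmul: "g (\<lambda>t. r * c t) = (\<lambda>k. r * g c k)" if "c \<in> fsupp_on T" for c r
    unfolding g_def by (rule lc_smul[OF fsupp_finite[OF that]])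
  have "lin_on K T \<phi>"
    unfolding lin_on_def
  proof (intro conjI ballI allI)
    fix v :: "'k \<Rightarrow> 'a" assume "v \<in> fsupp_on K" then show "\<phi> v \<in> fsupp_on T" by (rule phin)
  next
    fix u v :: "'k \<Rightarrow> 'a" assume u: "u \<in> fsupp_on K" and v: "v \<in> fsupp_on K"
    have "\<phi> (\<lambda>i. u i + v i) = \<phi> (g (\<lambda>t. \<phi> u t + \<phi> v t))"
      using gadd[OF phin[OF u] phin[OF v]] gphi[OF u] gphi[OF v] by simp
    also have "\<dots> = (\<lambda>t. \<phi> u t + \<phi> v t)" by (rule phig[OF fsupp_add[OF phin[OF u] phin[OF v]]])
    finally show "\<phi> (\<lambda>i. u i + v i) = (\<lambda>j. \<phi> u j + \<phi> v j)" .
  next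
    fix r :: 'a and v :: "'k \<Rightarrow> 'a" assume v: "v \<in> fsupp_on K"
    have "\<phi> (\<lambda>i. r * v i) = \<phi> (g (\<lambda>t. r * \<phi> v t))"
      using gsmul[OF phin[OF v]] gphi[OF v] by simp
    also have "\<dots> = (\<lambda>t. r * \<phi> v t)" by (rule phig[OF fsupp_smul[OF phin[OF v]]])
    finally show "\<phi> (\<lambda>i. r * v i) = (\<lambda>j. r * \<phi> v j)" .
  qed
  then show "lin_iso K T (inv_into (fsupp_on T) (\<lambda>c. lc c w))"
    using bphi by (simp add: lin_iso_def \<phi>_def g_def)
qed

end

lemma Inl_Plus [simp]: "Inl a \<in> A <+> B \<longleftrightarrow> a \<in> A" by auto
lemma Inr_Plus [simp]: "Inr b \<in> A <+> B \<longleftrightarrow> b \<in> B" by auto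

lemma Plus3E:
  assumes "t \<in> X <+> (Y <+> Z)"
  obtains s where "s \<in> X" "t = Inl s" | s where "s \<in> Y" "t = Inr (Inl s)" | s where "s \<in> Z" "t = Inr (Inr s)"
  using assms by blast

lemma sum3_cases:
  obtains (1) s where "t = Inl s" | (2) s where "t = Inr (Inl s)" | (3) s where "t = Inr (Inr s)"
proof (cases t)
  case (Inl s) then show ?thesis using that(1) by blast
next
  case (Inr u) then show ?thesis using that(2,3) by (cases u) blast+
qed

definition pr :: "'i + 'j \<Rightarrow> 'j" where "pr s = (case s of Inr j \<Rightarrow> j | Inl i \<Rightarrow> undefined)"
definition pl :: "'i + 'j \<Rightarrow> 'i" where "pl s = (case s of Inl i \<Rightarrow> i | Inr j \<Rightarrow> undefined)"
definition inner :: "'s + ('s + 's) \<Rightarrow> 's" where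
  "inner t = (case t of Inl s \<Rightarrow> s | Inr (Inl s) \<Rightarrow> s | Inr (Inr s) \<Rightarrow> s)"

lemma pr_Inr [simp]: "pr (Inr j) = j" by (simp add: pr_def)
lemma pl_Inl [simp]: "pl (Inl i) = i" by (simp add: pl_def)
lemma inner_simps [simp]: "inner (Inl s) = s" "inner (Inr (Inl s)) = s" "inner (Inr (Inr s)) = s"
  by (simp_all add: inner_def)

context lr begin

lemma inm_add: "inm m u \<Longrightarrow> inm m v \<Longrightarrow> inm m (\<lambda>k. u k + v k)"
  by (simp add: inm_def madd)
lemma inm_diff: "inm m u \<Longrightarrow> inm m v \<Longrightarrow> inm m (\<lambda>k. u k - v k)"
  by (simp add: inm_def msub)
lemma inm_smul: "inm m u \<Longrightarrow> inm m (\<lambda>k. r * u k)"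
  by (simp add: inm_def mleft)
lemma inm_zero: "inm m (\<lambda>k. 0)"
  by (simp add: inm_def m0)

lemma main_lr:
  fixes I :: "'i set" and J :: "'j set"
    and f :: "('i \<Rightarrow> 'a) \<Rightarrow> ('j \<Rightarrow> 'a)"
  assumes f: "lin_on I J f"
  shows "\<exists>(A::('i + 'j) set) B C D
            (\<phi>::('i \<Rightarrow> 'a) \<Rightarrow> (('i + 'j) + (('i + 'j) + ('i + 'j)) \<Rightarrow> 'a))
            (\<psi>::('j \<Rightarrow> 'a) \<Rightarrow> (('i + 'j) + (('i + 'j) + ('i + 'j)) \<Rightarrow> 'a)).
            lin_iso I (A <+> (B <+> C)) \<phi> \<and> lin_iso J (A <+> (B <+> D)) \<psi>
          \<and> (\<forall>p\<in>fsupp_on I. \<psi> (f p) = diag_map x (\<phi> p))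
          \<and> (finite I \<and> finite J \<longrightarrow> finite A \<and> finite B \<and> finite C \<and> finite D)"
proof -
  from ex_wo[where 'a='i] obtain ltI :: "'i \<Rightarrow> 'i \<Rightarrow> bool" where irrI: "\<forall>a. \<not> ltI a a"
    and trI: "\<forall>a b c. ltI a b \<longrightarrow> ltI b c \<longrightarrow> ltI a c"
    and totI: "\<forall>a b. a \<noteq> b \<longrightarrow> ltI a b \<or> ltI b a" and wfI: "wfP ltI"
    by (elim exE conjE)
  from ex_wo[where 'a='j] obtain ltJ :: "'j \<Rightarrow> 'j \<Rightarrow> bool" where irrJ: "\<forall>a. \<not> ltJ a a"
    and trJ: "\<forall>a b c. ltJ a b \<longrightarrow> ltJ b c \<longrightarrow> ltJ a c"
    and totJ: "\<forall>a b. a \<noteq> b \<longrightarrow> ltJ a b \<or> ltJ b a" and wfJ: "wfP ltJ"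
    by (elim exE conjE)
  define U1 where "U1 = {y \<in> fsupp_on J. \<exists>v\<in>fsupp_on I. inm m (\<lambda>j. y j - f v j)}"
  define U2 where "U2 = {y \<in> fsupp_on J. \<exists>v\<in>fsupp_on I. (\<lambda>j. x * y j) = f v}"
  define Kb where "Kb = {u \<in> fsupp_on I. \<exists>k\<in>fsupp_on I. f k = (\<lambda>j. 0) \<and> inm m (\<lambda>i. u i - k i)}"
  define A0 where "A0 = {j. \<exists>y\<in>U1. islead m ltJ y j}"
  define B0 where "B0 = {j. \<exists>y\<in>U2. islead m ltJ y j} - A0"
  define D0 where "D0 = J - A0 - B0"
  define C0 where "C0 = {i. \<exists>u\<in>Kb. islead m ltI u i}"
  define vA where "vA j = (SOME v. v \<in> fsupp_on I \<and> islead m ltJ (f v) j)" for j :: 'j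
  define gB where "gB j = (SOME g. g \<in> U2 \<and> islead m ltJ g j)" for j :: 'j
  define uB where "uB j = (SOME u. u \<in> fsupp_on I \<and> (\<lambda>k. x * gB j k) = f u)" for j :: 'j
  define kC where "kC i = (SOME k. k \<in> fsupp_on I \<and> f k = (\<lambda>j. 0) \<and> islead m ltI k i)" for i :: 'i
  define dl where "dl j = (\<lambda>j'. if j' = j then (1::'a) else 0)" for j :: 'j
  define wF where "wF t = (case t of Inl s \<Rightarrow> vA (pr s) | Inr (Inl s) \<Rightarrow> uB (pr s)
      | Inr (Inr s) \<Rightarrow> kC (pl s))" for t :: "('i + 'j) + (('i + 'j) + ('i + 'j))"
  define wG where "wG t = (case t of Inl s \<Rightarrow> f (vA (pr s)) | Inr (Inl s) \<Rightarrow> gB (pr s)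
      | Inr (Inr s) \<Rightarrow> dl (pr s))" for t :: "('i + 'j) + (('i + 'j) + ('i + 'j))"
  define A where "A = (Inr ` A0 :: ('i + 'j) set)"
  define B where "B = (Inr ` B0 :: ('i + 'j) set)"
  define C where "C = (Inl ` C0 :: ('i + 'j) set)"
  define D where "D = (Inr ` D0 :: ('i + 'j) set)"
  define TF where "TF = A <+> (B <+> C)"
  define TG where "TG = A <+> (B <+> D)"
  define lamG where "lamG t = pr (inner t)" for t :: "('i + 'j) + (('i + 'j) + ('i + 'j))"
  define lamF where "lamF t = pl (inner t)" for t :: "('i + 'j) + (('i + 'j) + ('i + 'j))"

  have wF_simps: "wF (Inl (Inr j)) = vA j" "wF (Inr (Inl (Inr j))) = uB j" "wF (Inr (Inr (Inl i))) = kC i"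
    for i j by (simp_all add: wF_def)
  have wG_simps: "wG (Inl (Inr j)) = f (vA j)" "wG (Inr (Inl (Inr j))) = gB j" "wG (Inr (Inr (Inr j))) = dl j"
    for j by (simp_all add: wG_def)
  have wG_Inl: "wG (Inl s) = f (wF (Inl s))" for s by (simp add: wG_def wF_def)
  have lam_simps: "lamG (Inl (Inr j)) = j" "lamG (Inr (Inl (Inr j))) = j" "lamG (Inr (Inr (Inr j))) = j"
    "lamF (Inr (Inr (Inl i))) = i" for i j by (simp_all add: lamG_def lamF_def)
  have AB: "A0 \<inter> B0 = {}" by (auto simp: B0_def)
  have AD: "A0 \<inter> D0 = {}" "B0 \<inter> D0 = {}" by (auto simp: D0_def)

  have U1_sub: "U1 \<subseteq> fsupp_on J" by (auto simp: U1_def)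
  have U2_sub: "U2 \<subseteq> fsupp_on J" by (auto simp: U2_def)
  have Kb_sub: "Kb \<subseteq> fsupp_on I" by (auto simp: Kb_def)
  have U1_add: "(\<lambda>k. u k + v k) \<in> U1" if uu: "u \<in> U1" and vv: "v \<in> U1" for u v
  proof -
    obtain a where a: "a \<in> fsupp_on I" "inm m (\<lambda>j. u j - f a j)" using uu unfolding U1_def by blast
    obtain b where b: "b \<in> fsupp_on I" "inm m (\<lambda>j. v j - f b j)" using vv unfolding U1_def by blast
    have ab: "(\<lambda>i. a i + b i) \<in> fsupp_on I" by (rule fsupp_add[OF a(1) b(1)])
    have "(\<lambda>j. (u j + v j) - f (\<lambda>i. a i + b i) j) = (\<lambda>j. (u j - f a j) + (v j - f b j))"
      by (simp add: lin_add[OF f a(1) b(1)] algebra_simps)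
    then have "inm m (\<lambda>j. (u j + v j) - f (\<lambda>i. a i + b i) j)" using inm_add[OF a(2) b(2)] by simp
    moreover have "(\<lambda>k. u k + v k) \<in> fsupp_on J" using that U1_sub fsupp_add by blast
    ultimately show ?thesis unfolding U1_def using ab by blast
  qed
  have U1_smul: "(\<lambda>k. r * u k) \<in> U1" if uu: "u \<in> U1" for u r
  proof -
    obtain a where a: "a \<in> fsupp_on I" "inm m (\<lambda>j. u j - f a j)" using uu unfolding U1_def by blast
    have ab: "(\<lambda>i. r * a i) \<in> fsupp_on I" by (rule fsupp_smul[OF a(1)])
    have "(\<lambda>j. r * u j - f (\<lambda>i. r * a i) j) = (\<lambda>j. r * (u j - f a j))"
      by (simp add: lin_smul[OF f a(1)] algebra_simps)
    then have "inm m (\<lambda>j. r * u j - f (\<lambda>i. r * a i) j)" using inm_smul[OF a(2)] by simp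
    moreover have "(\<lambda>k. r * u k) \<in> fsupp_on J" using that U1_sub fsupp_smul by blast
    ultimately show ?thesis unfolding U1_def using ab by blast
  qed
  have U2_add: "(\<lambda>k. u k + v k) \<in> U2" if uu: "u \<in> U2" and vv: "v \<in> U2" for u v
  proof -
    obtain a where a: "a \<in> fsupp_on I" "(\<lambda>j. x * u j) = f a" using uu unfolding U2_def by blast
    obtain b where b: "b \<in> fsupp_on I" "(\<lambda>j. x * v j) = f b" using vv unfolding U2_def by blast
    have ab: "(\<lambda>i. a i + b i) \<in> fsupp_on I" by (rule fsupp_add[OF a(1) b(1)])
    have "(\<lambda>j. x * (u j + v j)) = (\<lambda>j. x * u j + x * v j)" by (simp add: distrib_left)
    also have "\<dots> = f (\<lambda>i. a i + b i)" using a(2) b(2) lin_add[OF f a(1) b(1)] by metis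
    finally have "(\<lambda>j. x * (u j + v j)) = f (\<lambda>i. a i + b i)" .
    moreover have "(\<lambda>k. u k + v k) \<in> fsupp_on J" using that U2_sub fsupp_add by blast
    ultimately show ?thesis unfolding U2_def using ab by blast
  qed
  have U2_smul: "(\<lambda>k. r * u k) \<in> U2" if uu: "u \<in> U2" for u r
  proof -
    obtain a where a: "a \<in> fsupp_on I" "(\<lambda>j. x * u j) = f a" using uu unfolding U2_def by blast
    obtain r' where r': "x * r = r' * x" using lx[OF mright[OF xm, of r]] by blast
    have ab: "(\<lambda>i. r' * a i) \<in> fsupp_on I" by (rule fsupp_smul[OF a(1)])
    have "(\<lambda>j. x * (r * u j)) = (\<lambda>j. r' * (x * u j))" by (simp add: mult.assoc[symmetric] r')
    also have "\<dots> = (\<lambda>j. r' * f a j)" using a(2) by metis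
    also have "\<dots> = f (\<lambda>i. r' * a i)" by (rule lin_smul[OF f a(1), symmetric])
    finally have "(\<lambda>j. x * (r * u j)) = f (\<lambda>i. r' * a i)" .
    moreover have "(\<lambda>k. r * u k) \<in> fsupp_on J" using that U2_sub fsupp_smul by blast
    ultimately show ?thesis unfolding U2_def using ab by blast
  qed
  have Kb_add: "(\<lambda>k. u k + v k) \<in> Kb" if uu: "u \<in> Kb" and vv: "v \<in> Kb" for u v
  proof -
    obtain a where a: "a \<in> fsupp_on I" "f a = (\<lambda>j. 0)" "inm m (\<lambda>i. u i - a i)" using uu unfolding Kb_def by blast
    obtain b where b: "b \<in> fsupp_on I" "f b = (\<lambda>j. 0)" "inm m (\<lambda>i. v i - b i)" using vv unfolding Kb_def by blast
    have ab: "(\<lambda>i. a i + b i) \<in> fsupp_on I" by (rule fsupp_add[OF a(1) b(1)])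
    have fab: "f (\<lambda>i. a i + b i) = (\<lambda>j. 0)" using lin_add[OF f a(1) b(1)] a(2) b(2) by simp
    have "(\<lambda>i. (u i + v i) - (a i + b i)) = (\<lambda>i. (u i - a i) + (v i - b i))" by (simp add: algebra_simps)
    then have "inm m (\<lambda>i. (u i + v i) - (a i + b i))" using inm_add[OF a(3) b(3)] by simp
    moreover have "(\<lambda>k. u k + v k) \<in> fsupp_on I" using that Kb_sub fsupp_add by blast
    ultimately show ?thesis unfolding Kb_def using ab fab by blast
  qed
  have Kb_smul: "(\<lambda>k. r * u k) \<in> Kb" if uu: "u \<in> Kb" for u r
  proof -
    obtain a where a: "a \<in> fsupp_on I" "f a = (\<lambda>j. 0)" "inm m (\<lambda>i. u i - a i)" using uu unfolding Kb_def by blast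
    have ab: "(\<lambda>i. r * a i) \<in> fsupp_on I" by (rule fsupp_smul[OF a(1)])
    have fab: "f (\<lambda>i. r * a i) = (\<lambda>j. 0)" using lin_smul[OF f a(1)] a(2) by simp
    have "(\<lambda>i. r * u i - r * a i) = (\<lambda>i. r * (u i - a i))" by (simp add: algebra_simps)
    then have "inm m (\<lambda>i. r * u i - r * a i)" using inm_smul[OF a(3)] by simp
    moreover have "(\<lambda>k. r * u k) \<in> fsupp_on I" using that Kb_sub fsupp_smul by blast
    ultimately show ?thesis unfolding Kb_def using ab fab by blast
  qed
  have U12: "U1 \<subseteq> U2"
  proof
    fix u assume u: "u \<in> U1"
    obtain a where a: "a \<in> fsupp_on I" "inm m (\<lambda>j. u j - f a j)" using u unfolding U1_def by blast
    have "x * (u j - f a j) = 0" for j using a(2) xkill(1) by (simp add: inm_def)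
    then have "x * u j = x * f a j" for j by (simp add: right_diff_distrib)
    then have "(\<lambda>j. x * u j) = f (\<lambda>i. x * a i)" using lin_smul[OF f a(1)] by simp
    moreover have "(\<lambda>i. x * a i) \<in> fsupp_on I" by (rule fsupp_smul[OF a(1)])
    moreover have "u \<in> fsupp_on J" using u U1_sub by blast
    ultimately show "u \<in> U2" unfolding U2_def by blast
  qed

  have lead_in: "l \<in> K" if "v \<in> fsupp_on K" "islead m lt v l" for v K l and lt :: "'b \<Rightarrow> 'b \<Rightarrow> bool"
  proof (rule ccontr)
    assume "l \<notin> K" then have "v l = 0" using fsupp_out[OF that(1)] by blast
    then show False using that(2) m0 by (simp add: islead_def)
  qed
  have A0J: "A0 \<subseteq> J"
  proof
    fix j assume "j \<in> A0"
    then obtain y where y: "y \<in> U1" "islead m ltJ y j" unfolding A0_def by blast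
    have "y \<in> fsupp_on J" using y(1) U1_sub by blast
    then show "j \<in> J" using y(2) by (rule lead_in)
  qed
  have B0J: "B0 \<subseteq> J"
  proof
    fix j assume "j \<in> B0"
    then obtain y where y: "y \<in> U2" "islead m ltJ y j" unfolding B0_def by blast
    have "y \<in> fsupp_on J" using y(1) U2_sub by blast
    then show "j \<in> J" using y(2) by (rule lead_in)
  qed
  have C0I: "C0 \<subseteq> I"
  proof
    fix j assume "j \<in> C0"
    then obtain y where y: "y \<in> Kb" "islead m ltI y j" unfolding C0_def by blast
    have "y \<in> fsupp_on I" using y(1) Kb_sub by blast
    then show "j \<in> I" using y(2) by (rule lead_in)
  qed

  have vA: "vA j \<in> fsupp_on I \<and> islead m ltJ (f (vA j)) j" if jA: "j \<in> A0" for j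
  proof -
    obtain y where y: "y \<in> U1" "islead m ltJ y j" using jA unfolding A0_def by blast
    obtain a where a: "a \<in> fsupp_on I" "inm m (\<lambda>k. y k - f a k)" using y(1) unfolding U1_def by blast
    have "islead m ltJ (f a) j" using islead_cong[OF a(2)] y(2) by blast
    then have "\<exists>v. v \<in> fsupp_on I \<and> islead m ltJ (f v) j" using a(1) by blast
    then show ?thesis unfolding vA_def by (rule someI_ex)
  qed
  have gB: "gB j \<in> U2 \<and> islead m ltJ (gB j) j" if jB: "j \<in> B0" for j
  proof -
    have "\<exists>g. g \<in> U2 \<and> islead m ltJ g j" using jB unfolding B0_def by blast
    then show ?thesis unfolding gB_def by (rule someI_ex)
  qed
  have uB: "uB j \<in> fsupp_on I \<and> (\<lambda>k. x * gB j k) = f (uB j)" if jB: "j \<in> B0" for j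
  proof -
    have "gB j \<in> U2" using gB[OF jB] by blast
    then have "\<exists>u. u \<in> fsupp_on I \<and> (\<lambda>k. x * gB j k) = f u" unfolding U2_def by blast
    then show ?thesis unfolding uB_def by (rule someI_ex)
  qed
  have kC: "kC i \<in> fsupp_on I \<and> f (kC i) = (\<lambda>j. 0) \<and> islead m ltI (kC i) i" if iC: "i \<in> C0" for i
  proof -
    obtain u where u: "u \<in> Kb" "islead m ltI u i" using iC unfolding C0_def by blast
    obtain a where a: "a \<in> fsupp_on I" "f a = (\<lambda>j. 0)" "inm m (\<lambda>k. u k - a k)" using u(1) unfolding Kb_def by blast
    have "islead m ltI a i" using islead_cong[OF a(3)] u(2) by blast
    then have "\<exists>k. k \<in> fsupp_on I \<and> f k = (\<lambda>j. 0) \<and> islead m ltI k i" using a(1,2) by blast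
    then show ?thesis unfolding kC_def by (rule someI_ex)
  qed
  have dl: "dl j \<in> fsupp_on J \<and> islead m ltJ (dl j) j" if jJ: "j \<in> J" for j
  proof
    have "{j'. dl j j' \<noteq> 0} \<subseteq> {j}" by (auto simp: dl_def)
    then have "finite {j'. dl j j' \<noteq> 0}" by (rule finite_subset) simp
    then show "dl j \<in> fsupp_on J" using jJ by (intro fsupp_I) (auto simp: dl_def)
    have "\<forall>k. ltJ j k \<longrightarrow> dl j k \<in> m" using irrJ m0 by (auto simp: dl_def)
    then show "islead m ltJ (dl j) j" using one_notin by (simp add: islead_def dl_def)
  qed

  have TFc: "(\<exists>a\<in>A0. t = Inl (Inr a)) \<or> (\<exists>b\<in>B0. t = Inr (Inl (Inr b))) \<or> (\<exists>i\<in>C0. t = Inr (Inr (Inl i)))"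
    if "t \<in> TF" for t
    using that unfolding TF_def
  proof (elim Plus3E)
    fix s assume "s \<in> A" "t = Inl s" then show ?thesis by (auto simp: A_def)
  next
    fix s assume "s \<in> B" "t = Inr (Inl s)" then show ?thesis by (auto simp: B_def)
  next
    fix s assume "s \<in> C" "t = Inr (Inr s)" then show ?thesis by (auto simp: C_def)
  qed
  have TGc: "(\<exists>a\<in>A0. t = Inl (Inr a)) \<or> (\<exists>b\<in>B0. t = Inr (Inl (Inr b))) \<or> (\<exists>d\<in>D0. t = Inr (Inr (Inr d)))"
    if "t \<in> TG" for t
    using that unfolding TG_def
  proof (elim Plus3E)
    fix s assume "s \<in> A" "t = Inl s" then show ?thesis by (auto simp: A_def)
  next
    fix s assume "s \<in> B" "t = Inr (Inl s)" then show ?thesis by (auto simp: B_def)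
  next
    fix s assume "s \<in> D" "t = Inr (Inr s)" then show ?thesis by (auto simp: D_def)
  qed
  have D0J: "D0 \<subseteq> J" by (auto simp: D0_def)
  have wF_in: "wF t \<in> fsupp_on I" if "t \<in> TF" for t
    using TFc[OF that]
  proof (elim disjE bexE)
    fix a assume "a \<in> A0" "t = Inl (Inr a)" then show ?thesis using vA by (simp add: wF_simps)
  next
    fix a assume "a \<in> B0" "t = Inr (Inl (Inr a))" then show ?thesis using uB by (simp add: wF_simps)
  next
    fix a assume "a \<in> C0" "t = Inr (Inr (Inl a))" then show ?thesis using kC by (simp add: wF_simps)
  qed
  have wG_in: "wG t \<in> fsupp_on J" if "t \<in> TG" for t
    using TGc[OF that]
  proof (elim disjE bexE)
    fix a assume "a \<in> A0" "t = Inl (Inr a)" then show ?thesis using vA lin_in[OF f] by (simp add: wG_simps)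
  next
    fix a assume "a \<in> B0" "t = Inr (Inl (Inr a))" then show ?thesis using gB U2_sub by (auto simp: wG_simps)
  next
    fix a assume "a \<in> D0" "t = Inr (Inr (Inr a))" then show ?thesis using dl D0J by (auto simp: wG_simps)
  qed
  have wG_lead: "islead m ltJ (wG t) (lamG t)" if "t \<in> TG" for t
    using TGc[OF that]
  proof (elim disjE bexE)
    fix a assume "a \<in> A0" "t = Inl (Inr a)" then show ?thesis using vA by (simp add: wG_simps lam_simps)
  next
    fix a assume "a \<in> B0" "t = Inr (Inl (Inr a))" then show ?thesis using gB by (simp add: wG_simps lam_simps)
  next
    fix a assume "a \<in> D0" "t = Inr (Inr (Inr a))" then show ?thesis using dl D0J by (auto simp: wG_simps lam_simps)
  qed
  have injG: "inj_on lamG TG"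
  proof (rule inj_onI)
    fix s t assume s: "s \<in> TG" and t: "t \<in> TG" and e: "lamG s = lamG t"
    show "s = t" using TGc[OF s] TGc[OF t] e AB AD by (auto simp: lam_simps)
  qed

  have Gind: "\<forall>t. c t \<in> m" if "c \<in> fsupp_on TG" "inm m (lc c wG)" for c
    using core_indep[OF trJ totJ wG_lead injG that] by blast
  have Gsp: "\<exists>c\<in>fsupp_on TG. inm m (\<lambda>k. v k - lc c wG k)" if vJ: "v \<in> fsupp_on J" for v
  proof (rule span[OF irrJ trJ totJ wfJ subset_refl fsupp_add fsupp_smul wG_in wG_lead _ vJ])
    fix u l assume "u \<in> fsupp_on J" "islead m ltJ u l"
    then have lJ: "l \<in> J" by (rule lead_in)
    show "\<exists>t\<in>TG. lamG t = l"
    proof (cases "l \<in> A0")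
      case True
      then have "Inl (Inr l) \<in> TG" by (simp add: TG_def A_def)
      then show ?thesis using lam_simps(1) by blast
    next
      case nA: False
      show ?thesis
      proof (cases "l \<in> B0")
        case True
        then have "Inr (Inl (Inr l)) \<in> TG" by (simp add: TG_def B_def)
        then show ?thesis using lam_simps(2) by blast
      next
        case False
        then have "l \<in> D0" using nA lJ by (simp add: D0_def)
        then have "Inr (Inr (Inr l)) \<in> TG" by (simp add: TG_def D_def)
        then show ?thesis using lam_simps(3) by blast
      qed
    qed
  qed
  define T1 where "T1 = A <+> (({}::('i+'j) set) <+> ({}::('i+'j) set))"
  define T2 where "T2 = A <+> (B <+> ({}::('i+'j) set))"
  define T3 where "T3 = ({}::('i+'j) set) <+> (({}::('i+'j) set) <+> C)"
  define TB where "TB = ({}::('i+'j) set) <+> (B <+> ({}::('i+'j) set))"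
  have memA: "Inr a \<in> A \<longleftrightarrow> a \<in> A0" "Inr a \<in> B \<longleftrightarrow> a \<in> B0" "Inl i \<in> C \<longleftrightarrow> i \<in> C0"
    "Inr a \<in> D \<longleftrightarrow> a \<in> D0" for a i
    by (auto simp: A_def B_def C_def D_def)
  have T1c: "\<exists>a\<in>A0. t = Inl (Inr a)" if "t \<in> T1" for t
    using that unfolding T1_def by (auto simp: A_def)
  have T2c: "(\<exists>a\<in>A0. t = Inl (Inr a)) \<or> (\<exists>b\<in>B0. t = Inr (Inl (Inr b)))" if "t \<in> T2" for t
    using that unfolding T2_def by (auto simp: A_def B_def)
  have T3c: "\<exists>i\<in>C0. t = Inr (Inr (Inl i))" if "t \<in> T3" for t
    using that unfolding T3_def by (auto simp: C_def)
  have TBc: "\<exists>b\<in>B0. t = Inr (Inl (Inr b))" if "t \<in> TB" for t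
    using that unfolding TB_def by (auto simp: B_def)
  have Tsubs: "T1 \<subseteq> TF" "T2 \<subseteq> TF" "T3 \<subseteq> TF" "T1 \<subseteq> TG" "T2 \<subseteq> TG" "TB \<subseteq> TG" "TB \<subseteq> TF"
    by (auto simp: T1_def T2_def T3_def TB_def TF_def TG_def)
  have wl3: "islead m ltI (wF t) (lamF t)" if "t \<in> T3" for t
    using T3c[OF that] kC by (auto simp: wF_simps lam_simps)
  have inj3: "inj_on lamF T3"
  proof (rule inj_onI)
    fix s t assume s: "s \<in> T3" and t: "t \<in> T3" and e: "lamF s = lamF t"
    obtain i where i: "s = Inr (Inr (Inl i))" using T3c[OF s] by blast
    obtain i' where i': "t = Inr (Inr (Inl i'))" using T3c[OF t] by blast
    show "s = t" using e i i' by (simp add: lam_simps)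
  qed
  have suppF: "c t = 0" if "c \<in> fsupp_on TF" "t \<notin> TF" for c t
    using fsupp_out[OF that] .
  have Find: "\<forall>t. c t \<in> m" if cT: "c \<in> fsupp_on TF" and ci: "inm m (lc c wF)" for c
  proof -
    define p where "p = lc c wF"
    have cfin: "finite {t. c t \<noteq> 0}" by (rule fsupp_finite[OF cT])
    have pI: "p \<in> fsupp_on I" unfolding p_def by (rule lc_fsupp[OF cT wF_in])
    have pi: "inm m p" using ci by (simp add: p_def)
    have fpi: "inm m (f p)" by (rule lin_inm[OF f pI pi])
    have zF: "c t = 0" if "t \<notin> TF" for t by (rule suppF[OF cT that])
    define c1 where "c1 t = (case t of Inl _ \<Rightarrow> c t | Inr (Inl _) \<Rightarrow> c t * x | Inr (Inr _) \<Rightarrow> 0)" for t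
    have c1_simps: "c1 (Inl s) = c (Inl s)" "c1 (Inr (Inl s)) = c (Inr (Inl s)) * x" "c1 (Inr (Inr s)) = 0" for s
      by (simp_all add: c1_def)
    have c1sub: "{t. c1 t \<noteq> 0} \<subseteq> {t. c t \<noteq> 0}"
    proof
      fix t assume "t \<in> {t. c1 t \<noteq> 0}"
      then show "t \<in> {t. c t \<noteq> 0}" by (cases t rule: sum3_cases) (auto simp: c1_simps)
    qed
    have c1G: "c1 \<in> fsupp_on TG"
    proof (rule fsupp_I)
      fix t assume t: "t \<notin> TG"
      show "c1 t = 0"
      proof (cases t rule: sum3_cases)
        case (1 s) then have "t \<notin> TF" using t by (simp add: TF_def TG_def)
        then show ?thesis using 1 zF by (simp add: c1_simps)
      next
        case (2 s) then have "t \<notin> TF" using t by (simp add: TF_def TG_def)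
        then show ?thesis using 2 zF by (simp add: c1_simps)
      next
        case (3 s) then show ?thesis by (simp add: c1_simps)
      qed
    next
      show "finite {t. c1 t \<noteq> 0}" using cfin c1sub by (rule finite_subset[rotated])
    qed
    have cw: "\<And>t. c t \<noteq> 0 \<Longrightarrow> wF t \<in> fsupp_on I" using wF_in zF by blast
    have fp: "f p = lc c1 wG"
    proof -
      have "f p = lc c (\<lambda>t. f (wF t))" unfolding p_def by (rule lin_lc[OF f cfin, of wF, OF cw])
      also have "\<dots> = lc c1 wG"
      proof (rule lc_cong[OF cfin subset_refl c1sub])
        fix t k assume "t \<in> {t. c t \<noteq> 0}"
        then have tF: "t \<in> TF" using zF by blast
        show "c t * f (wF t) k = c1 t * wG t k"
          using TFc[OF tF]
        proof (elim disjE bexE)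
          fix a assume "a \<in> A0" "t = Inl (Inr a)" then show ?thesis by (simp add: wF_simps wG_simps c1_simps)
        next
          fix b assume b: "b \<in> B0" "t = Inr (Inl (Inr b))"
          have "f (uB b) k = x * gB b k" using uB[OF b(1)] by metis
          then show ?thesis using b by (simp add: wF_simps wG_simps c1_simps mult.assoc)
        next
          fix i assume i: "i \<in> C0" "t = Inr (Inr (Inl i))"
          then show ?thesis using kC[OF i(1)] by (simp add: wF_simps wG_simps c1_simps)
        qed
      qed
      finally show ?thesis .
    qed
    have c1m: "\<forall>t. c1 t \<in> m" using Gind[OF c1G] fpi fp by simp
    have cA: "c (Inl s) \<in> m" for s using c1m c1_simps(1)[of s] by metis
    define w' where "w' = dx p"
    have w'I: "w' \<in> fsupp_on I" unfolding w'_def by (rule dx_fsupp[OF pI])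
    have pw: "p = (\<lambda>i. x * w' i)" unfolding w'_def by (rule dx_eq[OF pi])
    have fpx: "f p = (\<lambda>j. x * f w' j)" using lin_smul[OF f w'I, of x] pw by simp
    define c2 where "c2 t = (if c t = 0 then 0 else (case t of Inl _ \<Rightarrow> (SOME r. c t = x * r)
        | Inr (Inl _) \<Rightarrow> (SOME r. c t * x = x * r) | Inr (Inr _) \<Rightarrow> 0))" for t
    have c1c2: "c1 t = x * c2 t" for t
    proof (cases "c t = 0")
      case True then show ?thesis by (cases t rule: sum3_cases) (simp_all add: c1_simps c2_def)
    next
      case False
      show ?thesis
      proof (cases t rule: sum3_cases)
        case (1 s)
        have "\<exists>r. c t = x * r" using rx cA 1 by blast
        then have "c t = x * (SOME r. c t = x * r)" by (rule someI_ex)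
        then show ?thesis using 1 False by (simp add: c1_simps c2_def)
      next
        case (2 s)
        have "\<exists>r. c t * x = x * r" using rx mleft[OF xm] by blast
        then have "c t * x = x * (SOME r. c t * x = x * r)" by (rule someI_ex)
        then show ?thesis using 2 False by (simp add: c1_simps c2_def)
      next
        case (3 s) then show ?thesis using False by (simp add: c1_simps c2_def)
      qed
    qed
    have c2sub: "{t. c2 t \<noteq> 0} \<subseteq> {t. c t \<noteq> 0}" by (auto simp: c2_def)
    have c2fin: "finite {t. c2 t \<noteq> 0}" using cfin c2sub by (rule finite_subset[rotated])
    have c2_Inr: "c2 (Inr (Inr s)) = 0" for s by (simp add: c2_def)
    have lc12: "lc c1 wG = (\<lambda>k. x * lc c2 wG k)"
    proof -
      have "c1 = (\<lambda>t. x * c2 t)" using c1c2 by blast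
      then show ?thesis using lc_smul[OF c2fin, of x wG] by simp
    qed
    have diffm: "inm m (\<lambda>k. lc c2 wG k - f w' k)"
    proof -
      have "x * (lc c2 wG k - f w' k) = 0" for k
      proof -
        have "x * lc c2 wG k = x * f w' k" using fp fpx lc12 by metis
        then show ?thesis by (simp add: right_diff_distrib)
      qed
      then show ?thesis using annr by (simp add: inm_def)
    qed
    define c2A where "c2A t = (case t of Inl _ \<Rightarrow> c2 t | Inr _ \<Rightarrow> 0)" for t
    define c2B where "c2B t = (case t of Inl _ \<Rightarrow> 0 | Inr (Inl _) \<Rightarrow> c2 t | Inr (Inr _) \<Rightarrow> 0)" for t
    have c2AB: "c2 = (\<lambda>t. c2A t + c2B t)"
    proof
      fix t show "c2 t = c2A t + c2B t"
        by (cases t rule: sum3_cases) (simp_all add: c2A_def c2B_def c2_Inr)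
    qed
    have c2Asub: "{t. c2A t \<noteq> 0} \<subseteq> {t. c t \<noteq> 0}"
    proof
      fix t assume "t \<in> {t. c2A t \<noteq> 0}"
      then have "c2 t \<noteq> 0" by (cases t) (auto simp: c2A_def)
      then show "t \<in> {t. c t \<noteq> 0}" using c2sub by blast
    qed
    have c2Bsub: "{t. c2B t \<noteq> 0} \<subseteq> {t. c t \<noteq> 0}"
    proof
      fix t assume "t \<in> {t. c2B t \<noteq> 0}"
      then have "c2 t \<noteq> 0" by (cases t rule: sum3_cases) (auto simp: c2B_def)
      then show "t \<in> {t. c t \<noteq> 0}" using c2sub by blast
    qed
    have c2Afin: "finite {t. c2A t \<noteq> 0}" using cfin c2Asub by (rule finite_subset[rotated])
    have c2Bfin: "finite {t. c2B t \<noteq> 0}" using cfin c2Bsub by (rule finite_subset[rotated])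
    have c2AF: "c2A \<in> fsupp_on TF"
      by (rule fsupp_I[OF _ c2Afin]) (use c2Asub zF in blast)
    have c2BTB: "c2B \<in> fsupp_on TB"
    proof (rule fsupp_I[OF _ c2Bfin])
      fix t assume t: "t \<notin> TB"
      show "c2B t = 0"
      proof (cases t rule: sum3_cases)
        case (1 s) then show ?thesis by (simp add: c2B_def)
      next
        case (2 s)
        then have "t \<notin> TF" using t by (simp add: TF_def TB_def)
        then have "c t = 0" by (rule zF)
        then show ?thesis using 2 by (simp add: c2B_def c2_def)
      next
        case (3 s) then show ?thesis by (simp add: c2B_def)
      qed
    qed
    have c2BG: "c2B \<in> fsupp_on TG" using fsupp_mono[OF c2BTB Tsubs(6)] .
    have c2Aw: "\<And>t. c2A t \<noteq> 0 \<Longrightarrow> wF t \<in> fsupp_on I" using c2Asub cw by blast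
    have lcA: "f (lc c2A wF) = lc c2A wG"
    proof -
      have "f (lc c2A wF) = lc c2A (\<lambda>t. f (wF t))" by (rule lin_lc[OF f c2Afin, of wF, OF c2Aw])
      also have "\<dots> = lc c2A wG"
      proof (rule lc_cong[OF c2Afin subset_refl subset_refl])
        fix t k assume "t \<in> {t. c2A t \<noteq> 0}"
        then obtain s where "t = Inl s" by (cases t) (auto simp: c2A_def)
        then show "c2A t * f (wF t) k = c2A t * wG t k" by (simp add: wG_Inl)
      qed
      finally show ?thesis .
    qed
    have lcAB: "lc c2 wG = (\<lambda>k. lc c2A wG k + lc c2B wG k)"
      using lc_add[OF c2Afin c2Bfin, of wG] c2AB by simp
    have lcAI: "lc c2A wF \<in> fsupp_on I" by (rule lc_fsupp[OF c2AF wF_in])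
    have BU1: "lc c2B wG \<in> U1"
    proof -
      define v' where "v' = (\<lambda>i. w' i - lc c2A wF i)"
      have v'I: "v' \<in> fsupp_on I" unfolding v'_def by (rule fsupp_diff[OF w'I lcAI])
      have fv': "f v' = (\<lambda>j. f w' j - lc c2A wG j)"
        unfolding v'_def using lin_diff[OF f w'I lcAI] lcA by simp
      have "(\<lambda>j. lc c2B wG j - f v' j) = (\<lambda>j. lc c2 wG j - f w' j)"
        by (simp add: fv' lcAB algebra_simps)
      then have "inm m (\<lambda>j. lc c2B wG j - f v' j)" using diffm by simp
      moreover have "lc c2B wG \<in> fsupp_on J" by (rule lc_fsupp[OF c2BG wG_in])
      ultimately show ?thesis unfolding U1_def using v'I by blast
    qed
    have wlB: "\<And>t. t \<in> TB \<Longrightarrow> islead m ltJ (wG t) (lamG t)" using wG_lead Tsubs(6) by blast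
    have injB: "inj_on lamG TB" using inj_on_subset[OF injG Tsubs(6)] .
    have c2Bm: "c2B t \<in> m" for t
    proof (rule ccontr)
      assume nt: "c2B t \<notin> m"
      obtain t' where t': "t' \<in> TB" "islead m ltJ (lc c2B wG) (lamG t')"
        using core[OF trJ totJ wlB injB c2BTB nt] by blast
      obtain b where b: "b \<in> B0" "t' = Inr (Inl (Inr b))" using TBc[OF t'(1)] by blast
      have "lamG t' \<in> A0" unfolding A0_def using BU1 t'(2) by blast
      then have "b \<in> A0" using b(2) by (simp add: lam_simps)
      then show False using b(1) AB by blast
    qed
    have cB: "c (Inr (Inl s)) \<in> m" for s
    proof -
      have "c (Inr (Inl s)) * x = x * c2B (Inr (Inl s))"
        using c1c2[of "Inr (Inl s)"] by (simp add: c1_simps c2B_def)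
      also have "\<dots> = 0" using xkill(1)[OF c2Bm] .
      finally show ?thesis by (rule annl)
    qed
    define cC where "cC t = (case t of Inl _ \<Rightarrow> 0 | Inr (Inl _) \<Rightarrow> 0 | Inr (Inr _) \<Rightarrow> c t)" for t
    have cCsub: "{t. cC t \<noteq> 0} \<subseteq> {t. c t \<noteq> 0}"
    proof
      fix t assume "t \<in> {t. cC t \<noteq> 0}"
      then show "t \<in> {t. c t \<noteq> 0}" by (cases t rule: sum3_cases) (auto simp: cC_def)
    qed
    have cCfin: "finite {t. cC t \<noteq> 0}" using cfin cCsub by (rule finite_subset[rotated])
    have cCT3: "cC \<in> fsupp_on T3"
    proof (rule fsupp_I[OF _ cCfin])
      fix t assume t: "t \<notin> T3"
      show "cC t = 0"
      proof (cases t rule: sum3_cases)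
        case (3 s)
        then have "t \<notin> TF" using t by (simp add: TF_def T3_def)
        then show ?thesis using 3 zF by (simp add: cC_def)
      qed (simp_all add: cC_def)
    qed
    define cAB where "cAB t = c t - cC t" for t
    have cABm: "cAB t \<in> m" for t
      by (cases t rule: sum3_cases) (simp_all add: cAB_def cC_def cA cB m0)
    have cABe: "cAB = (\<lambda>t. c t - cC t)" by (simp add: cAB_def fun_eq_iff)
    have cABfin: "finite {t. cAB t \<noteq> 0}"
      unfolding cABe by (rule fsupp_finite[OF fsupp_diff[OF cT fsupp_mono[OF cCT3 Tsubs(3)]]])
    have lcABm: "inm m (lc cAB wF)" by (rule lc_inm[OF cABfin cABm])
    have "cC = (\<lambda>t. c t - cAB t)" by (simp add: cAB_def)
    then have "lc cC wF = (\<lambda>k. lc c wF k - lc cAB wF k)" using lc_diff[OF cfin cABfin, of wF] by simp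
    then have "inm m (lc cC wF)" using inm_diff[OF ci lcABm] by simp
    then have cCm: "cC t \<in> m" for t using core_indep[OF trI totI wl3 inj3 cCT3] by blast
    show "\<forall>t. c t \<in> m"
    proof
      fix t have "c t = cAB t + cC t" by (simp add: cAB_def)
      then show "c t \<in> m" using madd[OF cABm cCm] by simp
    qed
  qed
  have Fsp: "\<exists>c\<in>fsupp_on TF. inm m (\<lambda>k. v k - lc c wF k)" if vI: "v \<in> fsupp_on I" for v
  proof -
    have fvU1: "f v \<in> U1"
    proof -
      have "inm m (\<lambda>j. f v j - f v j)" using inm_zero by simp
      then show ?thesis unfolding U1_def using lin_in[OF f vI] vI by blast
    qed
    have wU1: "wG t \<in> U1" if tT: "t \<in> T1" for t
    proof -
      obtain a where a: "a \<in> A0" "t = Inl (Inr a)" using T1c[OF tT] by blast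
      have "inm m (\<lambda>j. f (vA a) j - f (vA a) j)" using inm_zero by simp
      then have "f (vA a) \<in> U1" unfolding U1_def using lin_in[OF f] vA[OF a(1)] by blast
      then show ?thesis using a by (simp add: wG_simps)
    qed
    have cov1: "\<exists>t\<in>T1. lamG t = l" if "u \<in> U1" "islead m ltJ u l" for u l
    proof -
      have "l \<in> A0" using that unfolding A0_def by blast
      then have "Inl (Inr l) \<in> T1" by (simp add: T1_def memA)
      then show ?thesis using lam_simps(1) by blast
    qed
    have "\<exists>c\<in>fsupp_on T1. inm m (\<lambda>k. f v k - lc c wG k)"
    proof (rule span[OF irrJ trJ totJ wfJ U1_sub])
      show "\<And>u v. u \<in> U1 \<Longrightarrow> v \<in> U1 \<Longrightarrow> (\<lambda>k. u k + v k) \<in> U1" by (rule U1_add)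
      show "\<And>u r. u \<in> U1 \<Longrightarrow> (\<lambda>k. r * u k) \<in> U1" by (rule U1_smul)
      show "\<And>t. t \<in> T1 \<Longrightarrow> wG t \<in> U1" by (rule wU1)
      show "\<And>t. t \<in> T1 \<Longrightarrow> islead m ltJ (wG t) (lamG t)" using wG_lead Tsubs(4) by blast
      show "\<And>u l. u \<in> U1 \<Longrightarrow> islead m ltJ u l \<Longrightarrow> \<exists>t\<in>T1. lamG t = l" by (rule cov1)
      show "f v \<in> U1" by (rule fvU1)
    qed
    then obtain \<alpha> where \<alpha>: "\<alpha> \<in> fsupp_on T1" "inm m (\<lambda>k. f v k - lc \<alpha> wG k)" by blast
    have \<alpha>F: "\<alpha> \<in> fsupp_on TF" using fsupp_mono[OF \<alpha>(1) Tsubs(1)] .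
    have \<alpha>fin: "finite {t. \<alpha> t \<noteq> 0}" by (rule fsupp_finite[OF \<alpha>(1)])
    have \<alpha>w: "\<And>t. \<alpha> t \<noteq> 0 \<Longrightarrow> wF t \<in> fsupp_on I" using wF_in suppF[OF \<alpha>F] by blast
    have lc\<alpha>: "f (lc \<alpha> wF) = lc \<alpha> wG"
    proof -
      have "f (lc \<alpha> wF) = lc \<alpha> (\<lambda>t. f (wF t))" by (rule lin_lc[OF f \<alpha>fin, of wF, OF \<alpha>w])
      also have "\<dots> = lc \<alpha> wG"
      proof (rule lc_cong[OF \<alpha>fin subset_refl subset_refl])
        fix t k assume "t \<in> {t. \<alpha> t \<noteq> 0}"
        then have "t \<in> T1" using fsupp_sub[OF \<alpha>(1)] by blast
        then obtain a where "t = Inl (Inr a)" using T1c by blast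
        then show "\<alpha> t * f (wF t) k = \<alpha> t * wG t k" by (simp add: wG_Inl)
      qed
      finally show ?thesis .
    qed
    have lc\<alpha>I: "lc \<alpha> wF \<in> fsupp_on I" by (rule lc_fsupp[OF \<alpha>F wF_in])
    define v1 where "v1 = (\<lambda>i. v i - lc \<alpha> wF i)"
    have v1I: "v1 \<in> fsupp_on I" unfolding v1_def by (rule fsupp_diff[OF vI lc\<alpha>I])
    have fv1: "f v1 = (\<lambda>j. f v j - lc \<alpha> wG j)"
      unfolding v1_def using lin_diff[OF f vI lc\<alpha>I] lc\<alpha> by simp
    then have fv1m: "inm m (f v1)" using \<alpha>(2) by simp
    define h where "h = dx (f v1)"
    have hJ: "h \<in> fsupp_on J" unfolding h_def by (rule dx_fsupp[OF lin_in[OF f v1I]])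
    have fv1h: "f v1 = (\<lambda>j. x * h j)" unfolding h_def by (rule dx_eq[OF fv1m])
    have hU2: "h \<in> U2" unfolding U2_def using hJ v1I fv1h[symmetric] by blast
    have wU2: "wG t \<in> U2" if "t \<in> T2" for t
      using T2c[OF that]
    proof (elim disjE bexE)
      fix a assume a: "a \<in> A0" "t = Inl (Inr a)"
      have "inm m (\<lambda>j. f (vA a) j - f (vA a) j)" using inm_zero by simp
      then have "f (vA a) \<in> U1" unfolding U1_def using lin_in[OF f] vA[OF a(1)] by blast
      then show ?thesis using a U12 by (auto simp: wG_simps)
    next
      fix b assume b: "b \<in> B0" "t = Inr (Inl (Inr b))"
      then show ?thesis using gB[OF b(1)] by (simp add: wG_simps)
    qed
    have cov2: "\<exists>t\<in>T2. lamG t = l" if "u \<in> U2" "islead m ltJ u l" for u l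
    proof (cases "l \<in> A0")
      case True
      then have "Inl (Inr l) \<in> T2" by (simp add: T2_def memA)
      then show ?thesis using lam_simps(1) by blast
    next
      case False
      then have "l \<in> B0" using that unfolding B0_def by blast
      then have "Inr (Inl (Inr l)) \<in> T2" by (simp add: T2_def memA)
      then show ?thesis using lam_simps(2) by blast
    qed
    have "\<exists>c\<in>fsupp_on T2. inm m (\<lambda>k. h k - lc c wG k)"
    proof (rule span[OF irrJ trJ totJ wfJ U2_sub])
      show "\<And>u v. u \<in> U2 \<Longrightarrow> v \<in> U2 \<Longrightarrow> (\<lambda>k. u k + v k) \<in> U2" by (rule U2_add)
      show "\<And>u r. u \<in> U2 \<Longrightarrow> (\<lambda>k. r * u k) \<in> U2" by (rule U2_smul)
      show "\<And>t. t \<in> T2 \<Longrightarrow> wG t \<in> U2" by (rule wU2)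
      show "\<And>t. t \<in> T2 \<Longrightarrow> islead m ltJ (wG t) (lamG t)" using wG_lead Tsubs(5) by blast
      show "\<And>u l. u \<in> U2 \<Longrightarrow> islead m ltJ u l \<Longrightarrow> \<exists>t\<in>T2. lamG t = l" by (rule cov2)
      show "h \<in> U2" by (rule hU2)
    qed
    then obtain \<gamma> where \<gamma>: "\<gamma> \<in> fsupp_on T2" "inm m (\<lambda>k. h k - lc \<gamma> wG k)" by blast
    have \<gamma>fin: "finite {t. \<gamma> t \<noteq> 0}" by (rule fsupp_finite[OF \<gamma>(1)])
    have "x * (h k - lc \<gamma> wG k) = 0" for k using \<gamma>(2) xkill(1) by (simp add: inm_def)
    then have "x * h k = x * lc \<gamma> wG k" for k by (simp add: right_diff_distrib)
    then have xh: "(\<lambda>k. x * h k) = lc (\<lambda>t. x * \<gamma> t) wG"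
      using lc_smul[OF \<gamma>fin, of x wG] by simp
    define \<delta> where "\<delta> t = (if \<gamma> t = 0 then 0 else (case t of Inl _ \<Rightarrow> x * \<gamma> t
        | Inr _ \<Rightarrow> (SOME r. x * \<gamma> t = r * x)))" for t
    have \<delta>Inl: "\<delta> (Inl s) = x * \<gamma> (Inl s)" for s by (simp add: \<delta>_def)
    have \<delta>Inr: "x * \<gamma> (Inr s) = \<delta> (Inr s) * x" for s
    proof (cases "\<gamma> (Inr s) = 0")
      case True then show ?thesis by (simp add: \<delta>_def)
    next
      case False
      have "\<exists>r. x * \<gamma> (Inr s) = r * x" using lx[OF mright[OF xm]] by blast
      then have "x * \<gamma> (Inr s) = (SOME r. x * \<gamma> (Inr s) = r * x) * x" by (rule someI_ex)
      then show ?thesis using False by (simp add: \<delta>_def)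
    qed
    have \<delta>sub: "{t. \<delta> t \<noteq> 0} \<subseteq> {t. \<gamma> t \<noteq> 0}" by (auto simp: \<delta>_def)
    have \<delta>fin: "finite {t. \<delta> t \<noteq> 0}" using \<gamma>fin \<delta>sub by (rule finite_subset[rotated])
    have \<delta>T2: "\<delta> \<in> fsupp_on T2"
    proof (rule fsupp_I[OF _ \<delta>fin])
      fix t assume "t \<notin> T2" then have "\<gamma> t = 0" by (rule fsupp_out[OF \<gamma>(1)])
      then show "\<delta> t = 0" by (simp add: \<delta>_def)
    qed
    have \<delta>F: "\<delta> \<in> fsupp_on TF" using fsupp_mono[OF \<delta>T2 Tsubs(2)] .
    have \<delta>w: "\<And>t. \<delta> t \<noteq> 0 \<Longrightarrow> wF t \<in> fsupp_on I" using wF_in suppF[OF \<delta>F] by blast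
    have xgsub: "{t. x * \<gamma> t \<noteq> 0} \<subseteq> {t. \<gamma> t \<noteq> 0}" by auto
    have f\<delta>: "f (lc \<delta> wF) = (\<lambda>k. x * h k)"
    proof -
      have "f (lc \<delta> wF) = lc \<delta> (\<lambda>t. f (wF t))" by (rule lin_lc[OF f \<delta>fin, of wF, OF \<delta>w])
      also have "\<dots> = lc (\<lambda>t. x * \<gamma> t) wG"
      proof (rule lc_cong[OF \<gamma>fin \<delta>sub xgsub])
        fix t k assume "t \<in> {t. \<gamma> t \<noteq> 0}"
        then have tT2: "t \<in> T2" using fsupp_sub[OF \<gamma>(1)] by blast
        show "\<delta> t * f (wF t) k = x * \<gamma> t * wG t k"
          using T2c[OF tT2]
        proof (elim disjE bexE)
          fix a assume "a \<in> A0" "t = Inl (Inr a)"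
          then show ?thesis by (simp add: \<delta>Inl wF_simps wG_simps)
        next
          fix b assume b: "b \<in> B0" "t = Inr (Inl (Inr b))"
          have "f (uB b) k = x * gB b k" using uB[OF b(1)] by metis
          then have "\<delta> t * f (wF t) k = (\<delta> t * x) * gB b k" using b by (simp add: wF_simps mult.assoc)
          also have "\<dots> = x * \<gamma> t * wG t k" using b \<delta>Inr[of "Inl (Inr b)"] by (simp add: wG_simps)
          finally show ?thesis .
        qed
      qed
      also have "\<dots> = (\<lambda>k. x * h k)" using xh by simp
      finally show ?thesis .
    qed
    have lc\<delta>I: "lc \<delta> wF \<in> fsupp_on I" by (rule lc_fsupp[OF \<delta>F wF_in])
    define k0 where "k0 = (\<lambda>i. v1 i - lc \<delta> wF i)"
    have k0I: "k0 \<in> fsupp_on I" unfolding k0_def by (rule fsupp_diff[OF v1I lc\<delta>I])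
    have fk0: "f k0 = (\<lambda>j. 0)"
      unfolding k0_def using lin_diff[OF f v1I lc\<delta>I] f\<delta> fv1h by simp
    have k0K: "k0 \<in> Kb"
    proof -
      have "inm m (\<lambda>i. k0 i - k0 i)" using inm_zero by simp
      then show ?thesis unfolding Kb_def using k0I fk0 by blast
    qed
    have wU3: "wF t \<in> Kb" if tT: "t \<in> T3" for t
    proof -
      obtain i where i: "i \<in> C0" "t = Inr (Inr (Inl i))" using T3c[OF tT] by blast
      have "inm m (\<lambda>j. kC i j - kC i j)" using inm_zero by simp
      then have "kC i \<in> Kb" unfolding Kb_def using kC[OF i(1)] by blast
      then show ?thesis using i by (simp add: wF_simps)
    qed
    have cov3: "\<exists>t\<in>T3. lamF t = l" if "u \<in> Kb" "islead m ltI u l" for u l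
    proof -
      have "l \<in> C0" using that unfolding C0_def by blast
      then have "Inr (Inr (Inl l)) \<in> T3" by (simp add: T3_def memA)
      then show ?thesis using lam_simps(4) by blast
    qed
    have "\<exists>c\<in>fsupp_on T3. inm m (\<lambda>k. k0 k - lc c wF k)"
    proof (rule span[OF irrI trI totI wfI Kb_sub])
      show "\<And>u v. u \<in> Kb \<Longrightarrow> v \<in> Kb \<Longrightarrow> (\<lambda>k. u k + v k) \<in> Kb" by (rule Kb_add)
      show "\<And>u r. u \<in> Kb \<Longrightarrow> (\<lambda>k. r * u k) \<in> Kb" by (rule Kb_smul)
      show "\<And>t. t \<in> T3 \<Longrightarrow> wF t \<in> Kb" by (rule wU3)
      show "\<And>t. t \<in> T3 \<Longrightarrow> islead m ltI (wF t) (lamF t)" by (rule wl3)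
      show "\<And>u l. u \<in> Kb \<Longrightarrow> islead m ltI u l \<Longrightarrow> \<exists>t\<in>T3. lamF t = l" by (rule cov3)
      show "k0 \<in> Kb" by (rule k0K)
    qed
    then obtain \<kappa> where \<kappa>: "\<kappa> \<in> fsupp_on T3" "inm m (\<lambda>k. k0 k - lc \<kappa> wF k)" by blast
    have \<kappa>F: "\<kappa> \<in> fsupp_on TF" using fsupp_mono[OF \<kappa>(1) Tsubs(3)] .
    define c where "c = (\<lambda>t. (\<alpha> t + \<delta> t) + \<kappa> t)"
    have cF: "c \<in> fsupp_on TF" unfolding c_def by (rule fsupp_add[OF fsupp_add[OF \<alpha>F \<delta>F] \<kappa>F])
    have "lc c wF = (\<lambda>k. lc (\<lambda>t. \<alpha> t + \<delta> t) wF k + lc \<kappa> wF k)"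
      unfolding c_def by (rule lc_add[OF fsupp_finite[OF fsupp_add[OF \<alpha>F \<delta>F]] fsupp_finite[OF \<kappa>F]])
    also have "\<dots> = (\<lambda>k. (lc \<alpha> wF k + lc \<delta> wF k) + lc \<kappa> wF k)"
      using lc_add[OF \<alpha>fin \<delta>fin, of wF] by simp
    finally have lcc: "lc c wF = (\<lambda>k. (lc \<alpha> wF k + lc \<delta> wF k) + lc \<kappa> wF k)" .
    have "(\<lambda>k. v k - lc c wF k) = (\<lambda>k. k0 k - lc \<kappa> wF k)"
      by (simp add: lcc k0_def v1_def algebra_simps)
    then have "inm m (\<lambda>k. v k - lc c wF k)" using \<kappa>(2) by simp
    then show ?thesis using cF by blast
  qed
  define \<phi> where "\<phi> = inv_into (fsupp_on TF) (\<lambda>c. lc c wF)"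
  define \<psi> where "\<psi> = inv_into (fsupp_on TG) (\<lambda>c. lc c wG)"
  have bF: "bij_betw (\<lambda>c. lc c wF) (fsupp_on TF) (fsupp_on I)"
    by (rule basis(1)[OF wF_in Find Fsp])
  have isoF: "lin_iso I TF \<phi>"
    unfolding \<phi>_def by (rule basis(2)[OF wF_in Find Fsp])
  have bG: "bij_betw (\<lambda>c. lc c wG) (fsupp_on TG) (fsupp_on J)"
    by (rule basis(1)[OF wG_in Gind Gsp])
  have isoG: "lin_iso J TG \<psi>"
    unfolding \<psi>_def by (rule basis(2)[OF wG_in Gind Gsp])
  have comm: "\<forall>p\<in>fsupp_on I. \<psi> (f p) = diag_map x (\<phi> p)"
  proof
    fix p :: "'i \<Rightarrow> 'a" assume p: "p \<in> fsupp_on I"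
    define c where "c = \<phi> p"
    have c: "c \<in> fsupp_on TF" using isoF p unfolding c_def lin_iso_def lin_on_def by blast
    have "p \<in> (\<lambda>c. lc c wF) ` fsupp_on TF" using bF p by (simp add: bij_betw_def)
    then have pc: "lc c wF = p" using f_inv_into_f[of p "\<lambda>c. lc c wF" "fsupp_on TF"]
      by (simp add: c_def \<phi>_def)
    define d where "d = diag_map x c"
    have d_simps: "d (Inl s) = c (Inl s)" "d (Inr (Inl s)) = c (Inr (Inl s)) * x" "d (Inr (Inr s)) = 0" for s
      by (simp_all add: d_def diag_map_def)
    have dsub: "{t. d t \<noteq> 0} \<subseteq> {t. c t \<noteq> 0}"
    proof
      fix t assume "t \<in> {t. d t \<noteq> 0}"
      then show "t \<in> {t. c t \<noteq> 0}" by (cases t rule: sum3_cases) (auto simp: d_simps)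
    qed
    have cfin: "finite {t. c t \<noteq> 0}" by (rule fsupp_finite[OF c])
    have dG: "d \<in> fsupp_on TG"
    proof (rule fsupp_I)
      fix t assume t: "t \<notin> TG"
      show "d t = 0"
      proof (cases t rule: sum3_cases)
        case (1 s) then have "t \<notin> TF" using t by (simp add: TF_def TG_def)
        then show ?thesis using 1 suppF[OF c] by (simp add: d_simps)
      next
        case (2 s) then have "t \<notin> TF" using t by (simp add: TF_def TG_def)
        then show ?thesis using 2 suppF[OF c] by (simp add: d_simps)
      next
        case (3 s) then show ?thesis by (simp add: d_simps)
      qed
    next
      show "finite {t. d t \<noteq> 0}" using cfin dsub by (rule finite_subset[rotated])
    qed
    have cw: "\<And>t. c t \<noteq> 0 \<Longrightarrow> wF t \<in> fsupp_on I"
      using wF_in suppF[OF c] by blast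
    have "f p = lc c (\<lambda>t. f (wF t))" using lin_lc[OF f cfin, of wF, OF cw] pc by simp
    also have "\<dots> = lc d wG"
    proof (rule lc_cong[OF cfin subset_refl dsub])
      fix t k assume "t \<in> {t. c t \<noteq> 0}"
      then have tF: "t \<in> TF" using suppF[OF c] by blast
      show "c t * f (wF t) k = d t * wG t k"
        using TFc[OF tF]
      proof (elim disjE bexE)
        fix a assume "a \<in> A0" "t = Inl (Inr a)" then show ?thesis by (simp add: wF_simps wG_simps d_simps)
      next
        fix b assume b: "b \<in> B0" "t = Inr (Inl (Inr b))"
        have "f (uB b) k = x * gB b k" using uB[OF b(1)] by metis
        then show ?thesis using b by (simp add: wF_simps wG_simps d_simps mult.assoc)
      next
        fix i assume i: "i \<in> C0" "t = Inr (Inr (Inl i))"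
        then show ?thesis using kC[OF i(1)] by (simp add: wF_simps wG_simps d_simps)
      qed
    qed
    finally have fp: "f p = lc d wG" .
    have "inj_on (\<lambda>c. lc c wG) (fsupp_on TG)" using bG by (simp add: bij_betw_def)
    then have "\<psi> (lc d wG) = d" unfolding \<psi>_def using inv_into_f_f dG by metis
    then show "\<psi> (f p) = diag_map x (\<phi> p)" using fp by (simp add: d_def c_def)
  qed
  have fin: "finite I \<and> finite J \<longrightarrow> finite A \<and> finite B \<and> finite C \<and> finite D"
  proof
    assume fIJ: "finite I \<and> finite J"
    have "finite A0" "finite B0" "finite C0" "finite D0"
      using finite_subset[OF A0J] finite_subset[OF B0J] finite_subset[OF C0I] fIJ
      by (auto simp: D0_def)
    then show "finite A \<and> finite B \<and> finite C \<and> finite D" by (simp add: A_def B_def C_def D_def)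
  qed
  have "lin_iso I (A <+> (B <+> C)) \<phi> \<and> lin_iso J (A <+> (B <+> D)) \<psi>
          \<and> (\<forall>p\<in>fsupp_on I. \<psi> (f p) = diag_map x (\<phi> p))
          \<and> (finite I \<and> finite J \<longrightarrow> finite A \<and> finite B \<and> finite C \<and> finite D)"
    using isoF isoG comm fin unfolding TF_def TG_def by (intro conjI)
  then show ?thesis by (intro exI)
qed

end

lemma left_inv_aux:
  fixes m :: "'a::ring_1 set"
  assumes max: "maximal_left_ideal m"
    and sq: "\<forall>a\<in>m. \<forall>b\<in>m. a * b = 0"
    and a: "a \<notin> m"
  shows "\<exists>b. b * a = 1"
proof -
  have li: "left_ideal m" and nU: "m \<noteq> UNIV"
    and mx: "\<And>L'. left_ideal L' \<Longrightarrow> m \<subseteq> L' \<Longrightarrow> L' \<noteq> UNIV \<Longrightarrow> L' = m"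
    using max unfolding maximal_left_ideal_def by blast+
  have m0: "0 \<in> m" and madd: "\<And>u v. u \<in> m \<Longrightarrow> v \<in> m \<Longrightarrow> u + v \<in> m"
    and mneg: "\<And>u. u \<in> m \<Longrightarrow> - u \<in> m" and ml: "\<And>r u. u \<in> m \<Longrightarrow> r * u \<in> m"
    using li unfolding left_ideal_def by blast+
  define L where "L = {r * a + y | r y. y \<in> m}"
  have "left_ideal L"
    unfolding left_ideal_def
  proof (intro conjI ballI allI)
    have "(0::'a) = 0 * a + 0" by simp
    then show "0 \<in> L" unfolding L_def using m0 by blast
  next
    fix u v assume "u \<in> L" "v \<in> L"
    then obtain r1 y1 r2 y2 where "u = r1 * a + y1" "y1 \<in> m" "v = r2 * a + y2" "y2 \<in> m"
      unfolding L_def by blast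
    then have "u + v = (r1 + r2) * a + (y1 + y2)" "y1 + y2 \<in> m"
      by (simp_all add: algebra_simps madd)
    then show "u + v \<in> L" unfolding L_def by blast
  next
    fix u assume "u \<in> L"
    then obtain r y where "u = r * a + y" "y \<in> m" unfolding L_def by blast
    then have "- u = (- r) * a + (- y)" "- y \<in> m" by (simp_all add: mneg)
    then show "- u \<in> L" unfolding L_def by blast
  next
    fix s u assume "u \<in> L"
    then obtain r y where "u = r * a + y" "y \<in> m" unfolding L_def by blast
    then have "s * u = (s * r) * a + s * y" "s * y \<in> m" by (simp_all add: algebra_simps ml)
    then show "s * u \<in> L" unfolding L_def by blast
  qed
  moreover have "m \<subseteq> L"
  proof
    fix y assume "y \<in> m"
    then have "y = 0 * a + y" "y \<in> m" by simp_all
    then show "y \<in> L" unfolding L_def by blast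
  qed
  moreover have "a \<in> L"
  proof -
    have "a = 1 * a + 0" by simp
    then show ?thesis unfolding L_def using m0 by blast
  qed
  ultimately have "L = UNIV"
  proof -
    assume h: "left_ideal L" "m \<subseteq> L" "a \<in> L"
    show "L = UNIV"
    proof (rule ccontr)
      assume "L \<noteq> UNIV"
      then have "L = m" using mx h(1,2) by blast
      then show False using h(3) a by blast
    qed
  qed
  then have "1 \<in> L" by simp
  then obtain r y where ry: "1 = r * a + y" "y \<in> m" unfolding L_def by blast
  have yy: "y * y = 0" using sq ry(2) by blast
  have ra: "r * a = 1 - y" using ry(1) by (simp add: eq_diff_eq)
  have "(1 + y) * (r * a) = (1 + y) * (1 - y)" by (simp only: ra)
  also have "\<dots> = 1" using yy by (simp add: algebra_simps)
  finally have "((1 + y) * r) * a = 1" by (simp add: mult.assoc)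
  then show ?thesis by blast
qed

theorem mainTheorem5:
  fixes m :: "'a::ring_1 set" and x :: 'a
    and I :: "'i set" and J :: "'j set"
    and f :: "('i \<Rightarrow> 'a) \<Rightarrow> ('j \<Rightarrow> 'a)"
  assumes loc: "local_ring TYPE('a)"
    and max: "maximal_left_ideal m"
    and nz: "m \<noteq> {0}"
    and sq: "\<forall>a\<in>m. \<forall>b\<in>m. a * b = 0"
    and princ: "\<forall>y\<in>m - {0}. m = {r * y | r. True} \<and> m = {y * r | r. True}"
    and x: "x \<in> m" "x \<noteq> 0"
    and f: "lin_on I J f"
  shows "\<exists>(A::('i + 'j) set) B C D
            (\<phi>::('i \<Rightarrow> 'a) \<Rightarrow> (('i + 'j) + (('i + 'j) + ('i + 'j)) \<Rightarrow> 'a))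
            (\<psi>::('j \<Rightarrow> 'a) \<Rightarrow> (('i + 'j) + (('i + 'j) + ('i + 'j)) \<Rightarrow> 'a)).
            lin_iso I (A <+> (B <+> C)) \<phi> \<and> lin_iso J (A <+> (B <+> D)) \<psi>
          \<and> (\<forall>p\<in>fsupp_on I. \<psi> (f p) = diag_map x (\<phi> p))
          \<and> (finite I \<and> finite J \<longrightarrow> finite A \<and> finite B \<and> finite C \<and> finite D)"
proof -
  have li: "left_ideal m" and nU: "m \<noteq> UNIV"
    using max unfolding maximal_left_ideal_def by blast+
  have m0: "0 \<in> m" and madd: "\<And>u v. u \<in> m \<Longrightarrow> v \<in> m \<Longrightarrow> u + v \<in> m"
    and mneg: "\<And>u. u \<in> m \<Longrightarrow> - u \<in> m" and ml: "\<And>r u. u \<in> m \<Longrightarrow> r * u \<in> m"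
    using li unfolding left_ideal_def by blast+
  have xm0: "x \<in> m - {0}" using x by simp
  have ml_eq: "m = {r * x | r. True}" and mr_eq: "m = {x * r | r. True}" using princ xm0 by blast+
  have lx: "\<And>a. a \<in> m \<Longrightarrow> \<exists>r. a = r * x" using ml_eq by blast
  have rx: "\<And>a. a \<in> m \<Longrightarrow> \<exists>r. a = x * r" using mr_eq by blast
  have mr: "\<And>a r. a \<in> m \<Longrightarrow> a * r \<in> m"
  proof -
    fix a r assume "a \<in> m"
    then obtain s where "a = x * s" using rx by blast
    then have "a * r = x * (s * r)" by (simp add: mult.assoc)
    then show "a * r \<in> m" using mr_eq by blast
  qed
  have msq: "\<And>a b. a \<in> m \<Longrightarrow> b \<in> m \<Longrightarrow> a * b = 0" using sq by blast
  have linv: "\<And>a. a \<notin> m \<Longrightarrow> \<exists>b. b * a = 1" using left_inv_aux[OF max sq] by blast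
  have unit: "\<And>a. a \<notin> m \<Longrightarrow> \<exists>b. b * a = 1 \<and> a * b = 1"
  proof -
    fix a assume a: "a \<notin> m"
    obtain b where b: "b * a = 1" using linv[OF a] by blast
    have bm: "b \<notin> m"
    proof
      assume "b \<in> m"
      then have "(1::'a) \<in> m" using mr[of b a] b by simp
      then have "r \<in> m" for r using ml[of 1 r] by simp
      then have "m = UNIV" by blast
      then show False using nU by blast
    qed
    obtain c where c: "c * b = 1" using linv[OF bm] by blast
    have "c = c * (b * a)" using b by simp
    also have "\<dots> = a" using c by (simp add: mult.assoc[symmetric])
    finally have "a * b = 1" using c by simp
    then show "\<exists>b. b * a = 1 \<and> a * b = 1" using b by blast
  qed
  have annr: "\<And>a. x * a = 0 \<Longrightarrow> a \<in> m"
  proof (rule ccontr)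
    fix a assume xa: "x * a = 0" and a: "a \<notin> m"
    obtain b where "a * b = 1" using unit[OF a] by blast
    then have "x = x * a * b" by (simp add: mult.assoc)
    then show False using xa x(2) by simp
  qed
  have annl: "\<And>a. a * x = 0 \<Longrightarrow> a \<in> m"
  proof (rule ccontr)
    fix a assume xa: "a * x = 0" and a: "a \<notin> m"
    obtain b where "b * a = 1" using unit[OF a] by blast
    then have "x = b * (a * x)" by (simp add: mult.assoc[symmetric])
    then show False using xa x(2) by simp
  qed
  interpret lr m x
    apply (rule lr.intro)
               apply (fact m0)
              apply (fact madd)
             apply (fact mneg)
            apply (fact ml)
           apply (fact mr)
          apply (fact unit)
         apply (fact msq)
        apply (fact x(1))
       apply (fact lx)
      apply (fact rx)
     apply (fact annr)
    apply (fact annl)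
    done
  show ?thesis by (rule main_lr[OF f])
qed

end
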